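(* Let $\mathcal M=\langle M,<,+,\{x\mapsto\lambda x\}_{\lambda\in\Lambda}\rangle$ be an ordered vector space over an ordered division ring $\Lambda$, and let $E\subseteq\prod_{i\in[r]}M^{d_i}$ be a semilinear set. Then $Zar^\infty(E)$ holds: there is $\alpha\in\mathbb R_{>0}$ such that if $E$ contains no infinite grid, then $|E\cap B|\le\alpha\,\delta(B)$ for every finite grid $B$.
   Context: A semilinear set is a set definable (with parameters) in $\mathcal M$. A grid is a product $B=B_1\times\dots\times B_r$ with $B_i\subseteq M^{d_i}$; finite/infinite if each $B_i$ is. $\delta(B)=\sum_{1\le i_1<\dots<i_{r-1}\le r}\prod_{j=1}^{r-1}|B_{i_j}|$. *)

theory Defs
  imports Complex_Main
begin

definition ordered_vector_space :: "('l::{division_ring,linordered_ring_strict} \<Rightarrow> 'm::linordered_ab_group_add \<Rightarrow> 'm) \<Rightarrow> bool" where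
  "ordered_vector_space scale \<longleftrightarrow>
     (\<forall>a x y. scale a (x + y) = scale a x + scale a y) \<and>
     (\<forall>a b x. scale (a + b) x = scale a x + scale b x) \<and>
     (\<forall>a b x. scale (a * b) x = scale a (scale b x)) \<and>
     (\<forall>x. scale 1 x = x) \<and>
     (\<forall>a x y. 0 < a \<longrightarrow> x < y \<longrightarrow> scale a x < scale a y)"

datatype ('l, 'm) trm =
    Var nat
  | Const 'm            \<comment> \<open>parameter from M\<close>
  | Add "('l, 'm) trm" "('l, 'm) trm"
  | Scal 'l "('l, 'm) trm"

datatype ('l, 'm) fm =
    Less "('l, 'm) trm" "('l, 'm) trm"
  | Equal "('l, 'm) trm" "('l, 'm) trm"
  | Neg "('l, 'm) fm"
  | Conj "('l, 'm) fm" "('l, 'm) fm"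
  | Exists nat "('l, 'm) fm"

primrec trm_val :: "('l \<Rightarrow> 'm::linordered_ab_group_add \<Rightarrow> 'm) \<Rightarrow> (nat \<Rightarrow> 'm) \<Rightarrow> ('l, 'm) trm \<Rightarrow> 'm" where
  "trm_val sc env (Var i) = env i"
| "trm_val sc env (Const c) = c"
| "trm_val sc env (Add s t) = trm_val sc env s + trm_val sc env t"
| "trm_val sc env (Scal a t) = sc a (trm_val sc env t)"

primrec fm_sat :: "('l \<Rightarrow> 'm::linordered_ab_group_add \<Rightarrow> 'm) \<Rightarrow> (nat \<Rightarrow> 'm) \<Rightarrow> ('l, 'm) fm \<Rightarrow> bool" where
  "fm_sat sc env (Less s t) = (trm_val sc env s < trm_val sc env t)"
| "fm_sat sc env (Equal s t) = (trm_val sc env s = trm_val sc env t)"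
| "fm_sat sc env (Neg \<phi>) = (\<not> fm_sat sc env \<phi>)"
| "fm_sat sc env (Conj \<phi> \<psi>) = (fm_sat sc env \<phi> \<and> fm_sat sc env \<psi>)"
| "fm_sat sc env (Exists i \<phi>) = (\<exists>x. fm_sat sc (env(i := x)) \<phi>)"

text \<open>Environment associated with a tuple in M^n (variables beyond n get value 0;
  this is harmless since parameters are allowed).\<close>
definition tuple_env :: "'m::zero list \<Rightarrow> nat \<Rightarrow> 'm" where
  "tuple_env xs = (\<lambda>i. if i < length xs then xs ! i else 0)"

text \<open>Semilinear subset of M^n: definable with parameters.\<close>
definition semilinear :: "('l \<Rightarrow> 'm::linordered_ab_group_add \<Rightarrow> 'm) \<Rightarrow> nat \<Rightarrow> 'm list set \<Rightarrow> bool" where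
  "semilinear sc n S \<longleftrightarrow>
     (\<exists>\<phi>::('l, 'm) fm. S = {xs. length xs = n \<and> fm_sat sc (tuple_env xs) \<phi>})"

text \<open>A point of prod_{i<r} M^{d_i} is a list of r blocks, block i of length d i.\<close>
definition shaped :: "nat \<Rightarrow> (nat \<Rightarrow> nat) \<Rightarrow> 'm list list \<Rightarrow> bool" where
  "shaped r d xs \<longleftrightarrow> length xs = r \<and> (\<forall>i<r. length (xs ! i) = d i)"

text \<open>Semilinear subset of prod_{i<r} M^{d_i}, identified with M^{d_1+...+d_r}.\<close>
definition semilinear_prod :: "('l \<Rightarrow> 'm::linordered_ab_group_add \<Rightarrow> 'm) \<Rightarrow> nat \<Rightarrow> (nat \<Rightarrow> nat) \<Rightarrow> 'm list list set \<Rightarrow> bool" where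
  "semilinear_prod sc r d E \<longleftrightarrow>
     E \<subseteq> {xs. shaped r d xs} \<and> semilinear sc (\<Sum>i<r. d i) (concat ` E)"

definition grid :: "nat \<Rightarrow> (nat \<Rightarrow> 'm list set) \<Rightarrow> 'm list list set" where
  "grid r B = {xs. length xs = r \<and> (\<forall>i<r. xs ! i \<in> B i)}"

definition is_grid_factors :: "nat \<Rightarrow> (nat \<Rightarrow> nat) \<Rightarrow> (nat \<Rightarrow> 'm list set) \<Rightarrow> bool" where
  "is_grid_factors r d B \<longleftrightarrow> (\<forall>i<r. B i \<subseteq> {v. length v = d i})"

definition delta :: "nat \<Rightarrow> (nat \<Rightarrow> 'm list set) \<Rightarrow> real" where
  "delta r B = (\<Sum>I\<in>{I. I \<subseteq> {..<r} \<and> card I = r - 1}. \<Prod>i\<in>I. real (card (B i)))"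

end

theory Submission
  imports Defs "HOL-Library.FuncSet"
begin

locale ovs =
  fixes scale :: "'l::{division_ring,linordered_ring_strict} \<Rightarrow> 'm::linordered_ab_group_add \<Rightarrow> 'm"
  assumes ovs: "ordered_vector_space scale"
begin

lemma sadd_r: "scale a (x + y) = scale a x + scale a y"
  using ovs unfolding ordered_vector_space_def by blast
lemma sadd_l: "scale (a + b) x = scale a x + scale b x"
  using ovs unfolding ordered_vector_space_def by blast
lemma smult: "scale (a * b) x = scale a (scale b x)"
  using ovs unfolding ordered_vector_space_def by blast
lemma sone[simp]: "scale 1 x = x"
  using ovs unfolding ordered_vector_space_def by blast
lemma smono: "0 < a \<Longrightarrow> x < y \<Longrightarrow> scale a x < scale a y"
  using ovs unfolding ordered_vector_space_def by blast

lemma szero_l[simp]: "scale 0 x = 0"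
  using sadd_l[of 0 0 x] by simp
lemma szero_r[simp]: "scale a 0 = 0"
  using sadd_r[of a 0 0] by simp
lemma sminus_l: "scale (- a) x = - scale a x"
  using sadd_l[of a "-a" x] by (simp add: minus_unique)
lemma sminus_r: "scale a (- x) = - scale a x"
  using sadd_r[of a x "-x"] by (simp add: minus_unique)
lemma sdiff_l: "scale (a - b) x = scale a x - scale b x"
  using sadd_l[of a "-b" x] sminus_l by simp
lemma sdiff_r: "scale a (x - y) = scale a x - scale a y"
  using sadd_r[of a x "-y"] sminus_r by simp
lemma ssum_r: "scale a (sum f S) = (\<Sum>x\<in>S. scale a (f x))"
  by (induction S rule: infinite_finite_induct) (auto simp: sadd_r)
lemma ssum_l: "scale (sum f S) x = (\<Sum>i\<in>S. scale (f i) x)"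
  by (induction S rule: infinite_finite_induct) (auto simp: sadd_l)

lemma spos: "0 < a \<Longrightarrow> 0 < x \<Longrightarrow> 0 < scale a x"
  using smono[of a 0 x] by simp
lemma spos_neg: "0 < a \<Longrightarrow> x < 0 \<Longrightarrow> scale a x < 0"
  using smono[of a x 0] by simp
lemma sneg_pos: "a < 0 \<Longrightarrow> 0 < x \<Longrightarrow> scale a x < 0"
  using spos[of "-a" x] sminus_l[of a x] by simp
lemma sneg_neg: "a < 0 \<Longrightarrow> x < 0 \<Longrightarrow> 0 < scale a x"
  using spos_neg[of "-a" x] sminus_l[of a x] by simp
lemma smono_l: "a < b \<Longrightarrow> 0 < x \<Longrightarrow> scale a x < scale b x"
  using spos[of "b - a" x] sdiff_l[of b a x] by simp
lemma smono_le: "0 \<le> a \<Longrightarrow> x \<le> y \<Longrightarrow> scale a x \<le> scale a y"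
  by (metis dual_order.order_iff_strict le_less smono szero_l)
lemma smono_le_l: "a \<le> b \<Longrightarrow> 0 \<le> x \<Longrightarrow> scale a x \<le> scale b x"
  by (metis le_less smono_l szero_r)
lemma snonneg: "0 \<le> a \<Longrightarrow> 0 \<le> x \<Longrightarrow> 0 \<le> scale a x"
  using smono_le[of a 0 x] by simp

definition mabs :: "'m \<Rightarrow> 'm" where "mabs x = (if x < 0 then - x else x)"

lemma mabs_nonneg: "0 \<le> mabs x" by (auto simp add: mabs_def)

lemma mabs_pos: "0 \<le> x \<Longrightarrow> mabs x = x" by (auto simp add: mabs_def)
lemma mabs_neg: "x \<le> 0 \<Longrightarrow> mabs x = - x" by (auto simp add: mabs_def)

lemma sabs: "mabs (scale a x) = scale \<bar>a\<bar> (mabs x)"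
proof (cases "0 \<le> a")
  case ap: True
  show ?thesis
  proof (cases "0 \<le> x")
    case True then show ?thesis using ap snonneg[of a x] by (simp add: mabs_pos)
  next
    case False then show ?thesis using ap snonneg[of a "-x"] sminus_r[of a x]
      by (simp add: mabs_pos mabs_neg)
  qed
next
  case False
  then have na: "0 \<le> - a" and aa: "\<bar>a\<bar> = - a" by auto
  show ?thesis
  proof (cases "0 \<le> x")
    case True then show ?thesis using aa na snonneg[of "-a" x] sminus_l[of a x]
      by (simp add: mabs_pos mabs_neg)
  next
    case F2: False then show ?thesis using aa na snonneg[of "-a" "-x"] sminus_l[of a "-x"] sminus_r[of a x]
      by (simp add: mabs_pos mabs_neg)
  qed
qed

lemma sinv_l: "a \<noteq> 0 \<Longrightarrow> scale a (scale (inverse a) x) = x"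
  by (metis right_inverse smult sone)
lemma sinv_r: "a \<noteq> 0 \<Longrightarrow> scale (inverse a) (scale a x) = x"
  by (metis left_inverse smult sone)

lemma one_pos: "0 < (1::'l)"
proof -
  have "0 \<le> (1::'l) * 1" by (rule zero_le_square)
  then show ?thesis using zero_neq_one by (simp add: order_le_less)
qed

lemma inv_pos: "0 < (a::'l) \<Longrightarrow> 0 < inverse a"
proof (rule ccontr)
  assume a: "0 < a" and "\<not> 0 < inverse a"
  then have "inverse a \<le> 0" by simp
  then have "a * inverse a \<le> 0" using a by (meson less_imp_le mult_nonneg_nonpos)
  moreover have "a * inverse a = 1" using a by (simp add: right_inverse)
  ultimately show False using one_pos by simp
qed

end

definition samesign :: "'m::linordered_ab_group_add \<Rightarrow> 'm \<Rightarrow> bool" where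
  "samesign x y \<longleftrightarrow> (x < 0 \<longleftrightarrow> y < 0) \<and> (x = 0 \<longleftrightarrow> y = 0)"

lemma samesign_sym: "samesign x y \<Longrightarrow> samesign y x"
  by (auto simp: samesign_def)

lemma samesign_pos: "samesign x y \<Longrightarrow> (0 < x \<longleftrightarrow> 0 < y)"
  by (auto simp: samesign_def)

lemma samesign_posI: "0 < x \<Longrightarrow> 0 < y \<Longrightarrow> samesign x y"
  unfolding samesign_def using order.asym by fastforce
lemma samesign_negI: "x < 0 \<Longrightarrow> y < 0 \<Longrightarrow> samesign x y"
  unfolding samesign_def by fastforce

primrec trm_ok :: "nat \<Rightarrow> ('l, 'm) trm \<Rightarrow> bool" where
  "trm_ok N (Var i) = (i < N)"
| "trm_ok N (Const c) = True"
| "trm_ok N (Add s t) = (trm_ok N s \<and> trm_ok N t)"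
| "trm_ok N (Scal a t) = trm_ok N t"

primrec fm_ok :: "nat \<Rightarrow> ('l, 'm) fm \<Rightarrow> bool" where
  "fm_ok N (Less s t) = (trm_ok N s \<and> trm_ok N t)"
| "fm_ok N (Equal s t) = (trm_ok N s \<and> trm_ok N t)"
| "fm_ok N (Neg \<phi>) = fm_ok N \<phi>"
| "fm_ok N (Conj \<phi> \<psi>) = (fm_ok N \<phi> \<and> fm_ok N \<psi>)"
| "fm_ok N (Exists i \<phi>) = (i < N \<and> fm_ok N \<phi>)"

lemma trm_ok_mono: "trm_ok N t \<Longrightarrow> N \<le> N' \<Longrightarrow> trm_ok N' t"
  by (induction t) auto
lemma fm_ok_mono: "fm_ok N \<phi> \<Longrightarrow> N \<le> N' \<Longrightarrow> fm_ok N' \<phi>"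
  by (induction \<phi>) (auto intro: trm_ok_mono)
lemma trm_ok_ex: "\<exists>N. trm_ok N t"
proof (induction t)
  case (Add s t)
  then obtain N1 N2 where "trm_ok N1 s" "trm_ok N2 t" by blast
  then show ?case by (meson trm_ok.simps(3) trm_ok_mono max.cobounded1 max.cobounded2)
qed auto
lemma fm_ok_ex: "\<exists>N. fm_ok N \<phi>"
proof (induction \<phi>)
  case (Less s t)
  then obtain N1 N2 where "trm_ok N1 s" "trm_ok N2 t" using trm_ok_ex by blast
  then show ?case by (meson fm_ok.simps(1) trm_ok_mono max.cobounded1 max.cobounded2)
next
  case (Equal s t)
  then obtain N1 N2 where "trm_ok N1 s" "trm_ok N2 t" using trm_ok_ex by blast
  then show ?case by (meson fm_ok.simps(2) trm_ok_mono max.cobounded1 max.cobounded2)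
next
  case (Conj \<phi> \<psi>)
  then obtain N1 N2 where "fm_ok N1 \<phi>" "fm_ok N2 \<psi>" by blast
  then show ?case by (meson fm_ok.simps(4) fm_ok_mono max.cobounded1 max.cobounded2)
next
  case (Exists i \<phi>)
  then obtain N1 where "fm_ok N1 \<phi>" by blast
  then have "fm_ok (max N1 (Suc i)) \<phi>" by (meson fm_ok_mono max.cobounded1)
  then show ?case by (metis fm_ok.simps(5) lessI max.cobounded2 order_less_le_trans)
qed auto

context ovs
begin

lemma two_pos: "0 < (2::'l)"
  using one_pos by (metis add_pos_pos one_add_one)

lemma sdouble: "scale 2 x = x + x"
  by (metis one_add_one sadd_l sone)

lemma midpoint:
  assumes "a < b"
  shows "a < scale (inverse 2) (a + b)" "scale (inverse 2) (a + b) < b"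
proof -
  have i2: "0 < inverse (2::'l)" using two_pos inv_pos by blast
  have n2: "(2::'l) \<noteq> 0" using two_pos by simp
  have "a + a < a + b" using assms by simp
  then have "scale (inverse 2) (a + a) < scale (inverse 2) (a + b)" using smono i2 by blast
  moreover have "scale (inverse 2) (a + a) = a" using sinv_r[OF n2] sdouble by metis
  ultimately show "a < scale (inverse 2) (a + b)" by simp
  have "a + b < b + b" using assms by simp
  then have "scale (inverse 2) (a + b) < scale (inverse 2) (b + b)" using smono i2 by blast
  moreover have "scale (inverse 2) (b + b) = b" using sinv_r[OF n2] sdouble by metis
  ultimately show "scale (inverse 2) (a + b) < b" by simp
qed

lemma interpolate:
  fixes P Q :: "'m set"
  assumes "finite P" "finite Q" "\<forall>p\<in>P. \<forall>q\<in>Q. p < q" and e: "0 < (e::'m)"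
  shows "\<exists>y. (\<forall>p\<in>P. p < y) \<and> (\<forall>q\<in>Q. y < q)"
proof (cases "P = {}")
  case True
  show ?thesis
  proof (cases "Q = {}")
    case True then show ?thesis using \<open>P = {}\<close> by simp
  next
    case False
    have "Min Q - e < Min Q" using e by simp
    then show ?thesis using \<open>P = {}\<close> False assms(2)
      by (metis Min_le empty_iff order_less_le_trans)
  qed
next
  case False
  show ?thesis
  proof (cases "Q = {}")
    case True
    have "Max P < Max P + e" using e by simp
    then show ?thesis using True False assms(1)
      by (metis Max_ge empty_iff order_le_less_trans)
  next
    case QF: False
    have "Max P < Min Q" using assms False QF by (simp add: Max_less_iff Min_gr_iff)
    then show ?thesis using midpoint[of "Max P" "Min Q"] assms False QF
      by (meson Max_ge Min_le order_le_less_trans order_less_le_trans)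
  qed
qed

end

context ovs
begin

definition evalE :: "nat \<Rightarrow> (nat \<Rightarrow> 'l) \<times> 'm \<Rightarrow> (nat \<Rightarrow> 'm) \<Rightarrow> 'm" where
  "evalE N f env = (\<Sum>v<N. scale (fst f v) (env v)) + snd f"

definition fsub :: "(nat \<Rightarrow> 'l) \<times> 'm \<Rightarrow> (nat \<Rightarrow> 'l) \<times> 'm \<Rightarrow> (nat \<Rightarrow> 'l) \<times> 'm" where
  "fsub f g = (\<lambda>v. fst f v - fst g v, snd f - snd g)"

definition fsm :: "'l \<Rightarrow> (nat \<Rightarrow> 'l) \<times> 'm \<Rightarrow> (nat \<Rightarrow> 'l) \<times> 'm" where
  "fsm l f = (\<lambda>v. l * fst f v, scale l (snd f))"

primrec lin :: "('l, 'm) trm \<Rightarrow> (nat \<Rightarrow> 'l) \<times> 'm" where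
  "lin (Var i) = ((\<lambda>v. if v = i then 1 else 0), 0)"
| "lin (Const c) = ((\<lambda>v. 0), c)"
| "lin (Add s t) = ((\<lambda>v. fst (lin s) v + fst (lin t) v), snd (lin s) + snd (lin t))"
| "lin (Scal l t) = fsm l (lin t)"

lemma evalE_sub: "evalE N (fsub f g) env = evalE N f env - evalE N g env"
  by (simp add: evalE_def fsub_def sdiff_l sum_subtractf algebra_simps)

lemma evalE_sm: "evalE N (fsm l f) env = scale l (evalE N f env)"
  by (simp add: evalE_def fsm_def smult ssum_r sadd_r)

lemma lin_eval: "trm_ok N t \<Longrightarrow> evalE N (lin t) env = trm_val scale env t"
proof (induction t)
  case (Var i)
  have "(\<Sum>v<N. scale (if v = i then 1 else 0) (env v)) = (\<Sum>v<N. if v = i then env i else 0)"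
    by (rule sum.cong) auto
  also have "\<dots> = env i" using Var by simp
  finally show ?case by (simp add: evalE_def)
next
  case (Const c)
  then show ?case by (simp add: evalE_def)
next
  case (Add s t)
  have "evalE N (lin (Add s t)) env = evalE N (lin s) env + evalE N (lin t) env"
    by (simp add: evalE_def sadd_l sum.distrib algebra_simps)
  then show ?case using Add by simp
next
  case (Scal l t)
  then show ?case by (simp add: evalE_sm)
qed

lemma evalE_zero_i:
  assumes "i < N"
  shows "evalE N ((fst f)(i := 0), snd f) env = evalE N f env - scale (fst f i) (env i)"
proof -
  have "(\<Sum>v<N. scale (fst f v) (env v)) = (\<Sum>v<N. scale (((fst f)(i := 0)) v) (env v)) + (\<Sum>v<N. if v = i then scale (fst f i) (env i) else 0)"
    unfolding sum.distrib[symmetric] by (rule sum.cong) auto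
  also have "(\<Sum>v<N. if v = i then scale (fst f i) (env i) else 0) = scale (fst f i) (env i)"
    using assms by simp
  finally show ?thesis by (simp add: evalE_def algebra_simps)
qed

lemma evalE_upd:
  assumes "i < N"
  shows "evalE N f (env(i := x)) = evalE N f env + scale (fst f i) (x - env i)"
proof -
  have "(\<Sum>v<N. scale (fst f v) ((env(i := x)) v)) = (\<Sum>v<N. scale (fst f v) (env v)) + (\<Sum>v<N. if v = i then scale (fst f i) (x - env i) else 0)"
    unfolding sum.distrib[symmetric] by (rule sum.cong) (auto simp: sdiff_r)
  also have "(\<Sum>v<N. if v = i then scale (fst f i) (x - env i) else 0) = scale (fst f i) (x - env i)"
    using assms by simp
  finally show ?thesis by (simp add: evalE_def algebra_simps)
qed

lemma samesign_scale:
  assumes "a \<noteq> 0" "samesign u v"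
  shows "samesign (scale a u) (scale a v)"
proof -
  have c: "u < 0 \<and> v < 0 \<or> u = 0 \<and> v = 0 \<or> 0 < u \<and> 0 < v"
    using assms(2) unfolding samesign_def by (meson linorder_neqE)
  show ?thesis
  proof (cases "0 < a")
    case True
    show ?thesis using c
    proof (elim disjE conjE)
      assume "u < 0" "v < 0"
      then have "scale a u < 0" "scale a v < 0" using spos_neg True by auto
      then show ?thesis by (rule samesign_negI)
    next
      assume "u = 0" "v = 0" then show ?thesis by (simp add: samesign_def)
    next
      assume "0 < u" "0 < v"
      then have "0 < scale a u" "0 < scale a v" using spos True by auto
      then show ?thesis by (rule samesign_posI)
    qed
  next
    case False
    then have an: "a < 0" using assms(1) by simp
    show ?thesis using c
    proof (elim disjE conjE)
      assume "u < 0" "v < 0"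
      then have "0 < scale a u" "0 < scale a v" using sneg_neg an by auto
      then show ?thesis by (rule samesign_posI)
    next
      assume "u = 0" "v = 0" then show ?thesis by (simp add: samesign_def)
    next
      assume "0 < u" "0 < v"
      then have "scale a u < 0" "scale a v < 0" using sneg_pos an by auto
      then show ?thesis by (rule samesign_negI)
    qed
  qed
qed

definition detE :: "nat \<Rightarrow> ((nat \<Rightarrow> 'l) \<times> 'm) set \<Rightarrow> ('l, 'm) fm \<Rightarrow> bool" where
  "detE N F \<phi> \<longleftrightarrow> (\<forall>env env'. (\<forall>f\<in>F. samesign (evalE N f env) (evalE N f env')) \<longrightarrow>
      (fm_sat scale env \<phi> \<longleftrightarrow> fm_sat scale env' \<phi>))"

definition bnd :: "nat \<Rightarrow> (nat \<Rightarrow> 'l) \<times> 'm \<Rightarrow> (nat \<Rightarrow> 'l) \<times> 'm" where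
  "bnd i f = fsm (- inverse (fst f i)) ((fst f)(i := 0), snd f)"

lemma bnd_eval:
  assumes "i < N" "fst f i \<noteq> 0"
  shows "evalE N f env = scale (fst f i) (env i - evalE N (bnd i f) env)"
proof -
  have "evalE N (bnd i f) env = - scale (inverse (fst f i)) (evalE N f env - scale (fst f i) (env i))"
    unfolding bnd_def evalE_sm evalE_zero_i[OF assms(1)] sminus_l ..
  also have "\<dots> = env i - scale (inverse (fst f i)) (evalE N f env)"
    using sinv_r[OF assms(2)] by (simp add: sdiff_r)
  finally show ?thesis using sinv_l[OF assms(2)] by (simp add: sdiff_r)
qed

lemma bnd_upd:
  assumes "i < N"
  shows "evalE N (bnd i f) (env(i := x)) = evalE N (bnd i f) env"
  using evalE_upd[OF assms, of "bnd i f"] by (simp add: bnd_def fsm_def)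

lemma ex_step:
  assumes iN: "i < N" and fin: "finite F" and det: "detE N F \<phi>" and e: "0 < (e::'m)"
    and same: "\<forall>f\<in>{f\<in>F. fst f i = 0} \<union> {fsub (bnd i f) (bnd i g) |f g. f \<in> F \<and> g \<in> F \<and> fst f i \<noteq> 0 \<and> fst g i \<noteq> 0}.
                 samesign (evalE N f env) (evalE N f env')"
    and sat: "fm_sat scale (env(i := x)) \<phi>"
  shows "\<exists>y. fm_sat scale (env'(i := y)) \<phi>"
proof -
  define F1 where "F1 = {f\<in>F. fst f i \<noteq> 0}"
  define \<beta> where "\<beta> f = evalE N (bnd i f) env" for f
  define \<beta>' where "\<beta>' f = evalE N (bnd i f) env'" for f
  have diff: "samesign (\<beta> f - \<beta> g) (\<beta>' f - \<beta>' g)" if "f \<in> F1" "g \<in> F1" for f g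
  proof -
    have "fsub (bnd i f) (bnd i g) \<in> {fsub (bnd i f) (bnd i g) |f g. f \<in> F \<and> g \<in> F \<and> fst f i \<noteq> 0 \<and> fst g i \<noteq> 0}"
      using that unfolding F1_def by blast
    from same[rule_format, OF UnI2[OF this]] show ?thesis
      unfolding \<beta>_def \<beta>'_def evalE_sub .
  qed
  have zero: "samesign (evalE N f env) (evalE N f env')" if "f \<in> F" "fst f i = 0" for f
    using same[rule_format, OF UnI1] that by blast
  have "\<exists>y. \<forall>f\<in>F1. samesign (x - \<beta> f) (y - \<beta>' f)"
  proof (cases "\<exists>g\<in>F1. x = \<beta> g")
    case True
    then obtain g where g: "g \<in> F1" "x = \<beta> g" by blast
    show ?thesis
    proof (intro exI ballI)
      fix f assume "f \<in> F1"
      then show "samesign (x - \<beta> f) (\<beta>' g - \<beta>' f)" using diff[OF g(1), of f] g(2) by simp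
    qed
  next
    case False
    define Lo where "Lo = {f\<in>F1. \<beta> f < x}"
    define Hi where "Hi = {f\<in>F1. x < \<beta> f}"
    have "finite F1" using fin by (simp add: F1_def)
    then have fL: "finite (\<beta>' ` Lo)" and fH: "finite (\<beta>' ` Hi)" by (auto simp: Lo_def Hi_def)
    have "\<forall>p\<in>\<beta>' ` Lo. \<forall>q\<in>\<beta>' ` Hi. p < q"
    proof (clarify)
      fix f g assume "f \<in> Lo" "g \<in> Hi"
      then have "f \<in> F1" "g \<in> F1" "\<beta> f - \<beta> g < 0" by (auto simp: Lo_def Hi_def)
      then show "\<beta>' f < \<beta>' g" using diff[of f g] by (simp add: samesign_def)
    qed
    then obtain y where y: "\<forall>p\<in>\<beta>' ` Lo. p < y" "\<forall>q\<in>\<beta>' ` Hi. y < q"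
      using interpolate[OF fL fH _ e] by blast
    show ?thesis
    proof (intro exI ballI)
      fix f assume f: "f \<in> F1"
      then have "f \<in> Lo \<or> f \<in> Hi" using False by (auto simp: Lo_def Hi_def)
      then show "samesign (x - \<beta> f) (y - \<beta>' f)"
      proof
        assume "f \<in> Lo"
        then have "0 < x - \<beta> f" "0 < y - \<beta>' f" using y(1) by (auto simp: Lo_def simp del: split_paired_All)
        then show ?thesis by (rule samesign_posI)
      next
        assume "f \<in> Hi"
        then have "x - \<beta> f < 0" "y - \<beta>' f < 0" using y(2) by (auto simp: Hi_def simp del: split_paired_All)
        then show ?thesis by (rule samesign_negI)
      qed
    qed
  qed
  then obtain y where y: "\<forall>f\<in>F1. samesign (x - \<beta> f) (y - \<beta>' f)" by blast
  have "\<forall>f\<in>F. samesign (evalE N f (env(i := x))) (evalE N f (env'(i := y)))"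
  proof
    fix f assume f: "f \<in> F"
    show "samesign (evalE N f (env(i := x))) (evalE N f (env'(i := y)))"
    proof (cases "fst f i = 0")
      case True
      then show ?thesis using zero[OF f True] evalE_upd[OF iN] by simp
    next
      case False
      then have "f \<in> F1" using f by (simp add: F1_def)
      have "evalE N f (env(i := x)) = scale (fst f i) (x - \<beta> f)"
        using bnd_eval[OF iN False, of "env(i := x)"] bnd_upd[OF iN] by (simp add: \<beta>_def)
      moreover have "evalE N f (env'(i := y)) = scale (fst f i) (y - \<beta>' f)"
        using bnd_eval[OF iN False, of "env'(i := y)"] bnd_upd[OF iN] by (simp add: \<beta>'_def)
      ultimately show ?thesis using samesign_scale[OF False] y \<open>f \<in> F1\<close> by simp
    qed
  qed
  then have "fm_sat scale (env'(i := y)) \<phi>" using det sat unfolding detE_def by blast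
  then show ?thesis by blast
qed

lemma qe:
  assumes "fm_ok N \<phi>" and e: "0 < (e::'m)"
  shows "\<exists>F. finite F \<and> detE N F \<phi>"
  using assms(1)
proof (induction \<phi>)
  case (Less s t)
  show ?case
  proof (intro exI conjI)
    show "finite {fsub (lin t) (lin s)}" by simp
    show "detE N {fsub (lin t) (lin s)} (Less s t)"
      unfolding detE_def
    proof (intro allI impI)
      fix env env' assume "\<forall>f\<in>{fsub (lin t) (lin s)}. samesign (evalE N f env) (evalE N f env')"
      then have "samesign (trm_val scale env t - trm_val scale env s) (trm_val scale env' t - trm_val scale env' s)"
        using Less by (simp add: evalE_sub lin_eval)
      then have "0 < trm_val scale env t - trm_val scale env s \<longleftrightarrow> 0 < trm_val scale env' t - trm_val scale env' s"
        by (rule samesign_pos)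
      then show "fm_sat scale env (Less s t) = fm_sat scale env' (Less s t)" by simp
    qed
  qed
next
  case (Equal s t)
  show ?case
  proof (intro exI conjI)
    show "finite {fsub (lin t) (lin s)}" by simp
    show "detE N {fsub (lin t) (lin s)} (Equal s t)"
      unfolding detE_def
    proof (intro allI impI)
      fix env env' assume "\<forall>f\<in>{fsub (lin t) (lin s)}. samesign (evalE N f env) (evalE N f env')"
      then have "samesign (trm_val scale env t - trm_val scale env s) (trm_val scale env' t - trm_val scale env' s)"
        using Equal by (simp add: evalE_sub lin_eval)
      then have "trm_val scale env t - trm_val scale env s = 0 \<longleftrightarrow> trm_val scale env' t - trm_val scale env' s = 0"
        unfolding samesign_def by blast
      then show "fm_sat scale env (Equal s t) = fm_sat scale env' (Equal s t)" unfolding fm_sat.simps right_minus_eq by metis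
    qed
  qed
next
  case (Neg \<phi>)
  then obtain F where "finite F" "detE N F \<phi>" by auto
  then have "detE N F (Neg \<phi>)" unfolding detE_def fm_sat.simps by blast
  then show ?case using \<open>finite F\<close> by blast
next
  case (Conj \<phi> \<psi>)
  then obtain F G where "finite F" "detE N F \<phi>" "finite G" "detE N G \<psi>" by auto
  then have "detE N (F \<union> G) (Conj \<phi> \<psi>)" unfolding detE_def fm_sat.simps by (metis UnCI)
  then show ?case using \<open>finite F\<close> \<open>finite G\<close> by blast
next
  case (Exists i \<phi>)
  then obtain F where F: "finite F" "detE N F \<phi>" and iN: "i < N" by auto
  define F' where "F' = {f\<in>F. fst f i = 0} \<union> {fsub (bnd i f) (bnd i g) |f g. f \<in> F \<and> g \<in> F \<and> fst f i \<noteq> 0 \<and> fst g i \<noteq> 0}"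
  have "{fsub (bnd i f) (bnd i g) |f g. f \<in> F \<and> g \<in> F \<and> fst f i \<noteq> 0 \<and> fst g i \<noteq> 0}
        \<subseteq> (\<lambda>(f, g). fsub (bnd i f) (bnd i g)) ` (F \<times> F)" by auto
  moreover have "finite ((\<lambda>(f, g). fsub (bnd i f) (bnd i g)) ` (F \<times> F))" using F(1) by simp
  ultimately have "finite {fsub (bnd i f) (bnd i g) |f g. f \<in> F \<and> g \<in> F \<and> fst f i \<noteq> 0 \<and> fst g i \<noteq> 0}"
    by (rule finite_subset)
  then have "finite F'" unfolding F'_def using F(1) by simp
  moreover have "detE N F' (Exists i \<phi>)"
    unfolding detE_def fm_sat.simps
  proof (intro allI impI)
    fix env env'
    assume s: "\<forall>f\<in>F'. samesign (evalE N f env) (evalE N f env')"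
    then have s': "\<forall>f\<in>F'. samesign (evalE N f env') (evalE N f env)"
      using samesign_sym by blast
    show "(\<exists>x. fm_sat scale (env(i := x)) \<phi>) = (\<exists>x. fm_sat scale (env'(i := x)) \<phi>)"
    proof
      assume "\<exists>x. fm_sat scale (env(i := x)) \<phi>"
      then obtain x where "fm_sat scale (env(i := x)) \<phi>" by blast
      from ex_step[OF iN F e s[unfolded F'_def] this] show "\<exists>x. fm_sat scale (env'(i := x)) \<phi>" .
    next
      assume "\<exists>x. fm_sat scale (env'(i := x)) \<phi>"
      then obtain x where "fm_sat scale (env'(i := x)) \<phi>" by blast
      from ex_step[OF iN F e s'[unfolded F'_def] this] show "\<exists>x. fm_sat scale (env(i := x)) \<phi>" .
    qed
  qed
  ultimately show ?case by blast
qed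

end

definition Pts :: "nat \<Rightarrow> (nat \<Rightarrow> nat set) \<Rightarrow> (nat \<Rightarrow> nat \<Rightarrow> 'm) set" where
  "Pts r T = PiE {..<r} (\<lambda>i. PiE (T i) (\<lambda>_. UNIV))"

definition deltaP :: "nat \<Rightarrow> (nat \<Rightarrow> 'x set) \<Rightarrow> real" where
  "deltaP r B = (\<Sum>I\<in>{I. I \<subseteq> {..<r} \<and> card I = r - 1}. \<Prod>i\<in>I. real (card (B i)))"

definition noinf :: "nat \<Rightarrow> (nat \<Rightarrow> nat set) \<Rightarrow> (nat \<Rightarrow> nat \<Rightarrow> 'm) set \<Rightarrow> bool" where
  "noinf r T E \<longleftrightarrow> \<not> (\<exists>G. (\<forall>i<r. G i \<subseteq> PiE (T i) (\<lambda>_. UNIV) \<and> infinite (G i)) \<and> PiE {..<r} G \<subseteq> E)"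

definition factors :: "nat \<Rightarrow> (nat \<Rightarrow> nat set) \<Rightarrow> (nat \<Rightarrow> (nat \<Rightarrow> 'm) set) \<Rightarrow> bool" where
  "factors r T B \<longleftrightarrow> (\<forall>i<r. B i \<subseteq> PiE (T i) (\<lambda>_. UNIV) \<and> finite (B i))"

lemma finite_idx: "finite {I. I \<subseteq> {..<(r::nat)} \<and> card I = r - 1}"
  by (rule finite_subset[of _ "Pow {..<r}"]) auto

lemma deltaP_nonneg: "0 \<le> deltaP r B"
  unfolding deltaP_def by (intro sum_nonneg prod_nonneg) auto

lemma deltaP_mono:
  assumes "\<forall>i<r. card (B' i) \<le> card (B i)"
  shows "deltaP r B' \<le> deltaP r B"
  unfolding deltaP_def
proof (rule sum_mono)
  fix I assume "I \<in> {I. I \<subseteq> {..<r} \<and> card I = r - 1}"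
  then have "I \<subseteq> {..<r}" by simp
  then show "(\<Prod>i\<in>I. real (card (B' i))) \<le> (\<Prod>i\<in>I. real (card (B i)))"
    using assms by (intro prod_mono) auto
qed

lemma grid_small:
  assumes fin: "\<forall>i<r. finite (B i)" and j: "j < r" "card (B j) \<le> 1"
  shows "real (card (PiE {..<r} B)) \<le> deltaP r B"
proof -
  have "real (card (PiE {..<r} B)) = (\<Prod>i<r. real (card (B i)))"
    by (simp add: card_PiE)
  also have "\<dots> = real (card (B j)) * (\<Prod>i\<in>{..<r} - {j}. real (card (B i)))"
    using j by (simp add: prod.remove)
  also have "\<dots> \<le> (\<Prod>i\<in>{..<r} - {j}. real (card (B i)))"
    using j by (intro mult_left_le_one_le prod_nonneg) auto
  also have "\<dots> \<le> deltaP r B"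
    unfolding deltaP_def
    by (rule member_le_sum[OF _ _ finite_idx]) (use j in \<open>auto intro!: prod_nonneg\<close>)
  finally show ?thesis .
qed

lemma grid_r0: "real (card (PiE {..<(0::nat)} B)) \<le> deltaP 0 B"
proof -
  have "{I. I \<subseteq> {..<(0::nat)} \<and> card I = 0 - 1} = {{}}" by auto
  then show ?thesis by (simp add: deltaP_def)
qed

lemma delta_sum:
  assumes finW: "finite W" and sub: "\<forall>w\<in>W. \<forall>i<r. B' w i \<subseteq> B i" and fin: "\<forall>i<r. finite (B i)"
    and disj: "\<forall>w\<in>W. \<forall>w'\<in>W. w \<noteq> w' \<longrightarrow> (\<forall>I. I \<subseteq> {..<r} \<and> card I = r - 1 \<longrightarrow> (\<exists>i\<in>I. B' w i \<inter> B' w' i = {}))"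
  shows "(\<Sum>w\<in>W. deltaP r (B' w)) \<le> deltaP r B"
proof -
  have "(\<Sum>w\<in>W. deltaP r (B' w)) = (\<Sum>I\<in>{I. I \<subseteq> {..<r} \<and> card I = r - 1}. \<Sum>w\<in>W. \<Prod>i\<in>I. real (card (B' w i)))"
    unfolding deltaP_def by (rule sum.swap)
  also have "\<dots> \<le> deltaP r B"
    unfolding deltaP_def
  proof (rule sum_mono)
    fix I assume "I \<in> {I. I \<subseteq> {..<r} \<and> card I = r - 1}"
    then have I: "I \<subseteq> {..<r}" "card I = r - 1" by auto
    then have finI: "finite I" by (meson finite_lessThan finite_subset)
    have finP: "finite (PiE I (B' w))" if "w \<in> W" for w
      using that I sub fin by (intro finite_PiE finI) (meson finite_subset lessThan_iff subsetD)
    have "(\<Sum>w\<in>W. \<Prod>i\<in>I. real (card (B' w i))) = (\<Sum>w\<in>W. real (card (PiE I (B' w))))"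
      using finI by (simp add: card_PiE)
    also have "\<dots> = real (\<Sum>w\<in>W. card (PiE I (B' w)))" by simp
    also have "(\<Sum>w\<in>W. card (PiE I (B' w))) = card (\<Union>w\<in>W. PiE I (B' w))"
    proof (rule card_UN_disjoint[symmetric])
      show "finite W" by fact
      show "\<forall>w\<in>W. finite (PiE I (B' w))" using finP by blast
      show "\<forall>w\<in>W. \<forall>w'\<in>W. w \<noteq> w' \<longrightarrow> PiE I (B' w) \<inter> PiE I (B' w') = {}"
      proof (intro ballI impI)
        fix w w' assume "w \<in> W" "w' \<in> W" "w \<noteq> w'"
        then obtain i where "i \<in> I" "B' w i \<inter> B' w' i = {}" using disj I by blast
        then show "PiE I (B' w) \<inter> PiE I (B' w') = {}" by (auto simp: PiE_def Pi_def)
      qed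
    qed
    also have "card (\<Union>w\<in>W. PiE I (B' w)) \<le> card (PiE I B)"
    proof (rule card_mono)
      show "finite (PiE I B)" using finI fin I by (intro finite_PiE) auto
      show "(\<Union>w\<in>W. PiE I (B' w)) \<subseteq> PiE I B"
        using sub I by (auto simp: PiE_def Pi_def) (meson lessThan_iff subset_iff)
    qed
    finally show "(\<Sum>w\<in>W. \<Prod>i\<in>I. real (card (B' w i))) \<le> (\<Prod>i\<in>I. real (card (B i)))"
      using finI by (simp add: card_PiE)
  qed
  finally show ?thesis .
qed

context ovs
begin

definition Lb :: "(nat \<Rightarrow> nat set) \<Rightarrow> (nat \<Rightarrow> nat \<Rightarrow> 'l) \<Rightarrow> nat \<Rightarrow> (nat \<Rightarrow> 'm) \<Rightarrow> 'm" where
  "Lb T a j z = (\<Sum>t\<in>T j. scale (a j t) (z t))"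

definition evalP :: "nat \<Rightarrow> (nat \<Rightarrow> nat set) \<Rightarrow> (nat \<Rightarrow> nat \<Rightarrow> 'l) \<times> 'm \<Rightarrow> (nat \<Rightarrow> nat \<Rightarrow> 'm) \<Rightarrow> 'm" where
  "evalP r T f p = (\<Sum>i<r. Lb T (fst f) i (p i)) + snd f"

definition detP :: "nat \<Rightarrow> (nat \<Rightarrow> nat set) \<Rightarrow> ((nat \<Rightarrow> nat \<Rightarrow> 'l) \<times> 'm) list \<Rightarrow> (nat \<Rightarrow> nat \<Rightarrow> 'm) set \<Rightarrow> bool" where
  "detP r T Fs E \<longleftrightarrow> (\<forall>p\<in>Pts r T. \<forall>q\<in>Pts r T. (\<forall>f\<in>set Fs. samesign (evalP r T f p) (evalP r T f q)) \<longrightarrow> (p \<in> E \<longleftrightarrow> q \<in> E))"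

definition nz :: "nat \<Rightarrow> (nat \<Rightarrow> nat set) \<Rightarrow> (nat \<Rightarrow> nat \<Rightarrow> 'l) \<Rightarrow> bool" where
  "nz r T a \<longleftrightarrow> (\<exists>j<r. \<exists>t\<in>T j. a j t \<noteq> 0)"

lemma le_mabs: "x \<le> mabs x" "- x \<le> mabs x"
  unfolding mabs_def by auto

lemma mabs_lt: "mabs x < c \<longleftrightarrow> - c < x \<and> x < c"
proof (cases "x < 0")
  case True
  then have m: "mabs x = - x" by (simp add: mabs_def)
  show ?thesis
  proof
    assume "mabs x < c"
    then have "- x < c" using m by simp
    moreover have "x < - x" using True by (meson less_trans neg_0_less_iff_less)
    ultimately have "- c < x" by (auto simp: minus_less_iff)
    moreover have "x < c" using \<open>- x < c\<close> \<open>x < - x\<close> by (rule less_trans[rotated])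
    ultimately show "- c < x \<and> x < c" by simp
  next
    assume "- c < x \<and> x < c"
    then show "mabs x < c" using m by (simp add: minus_less_iff)
  qed
next
  case False
  then have m: "mabs x = x" by (simp add: mabs_def)
  show ?thesis
  proof
    assume "mabs x < c"
    then have "x < c" using m by simp
    moreover have "- x \<le> x" using False by (meson neg_le_0_iff_le order_trans not_less)
    ultimately show "- c < x \<and> x < c" by (metis le_less_trans minus_less_iff)
  next
    assume "- c < x \<and> x < c"
    then show "mabs x < c" using m by simp
  qed
qed

lemma mabs_add: "mabs (x + y) \<le> mabs x + mabs y"
proof -
  have a: "x + y \<le> mabs x + mabs y" by (rule add_mono[OF le_mabs(1) le_mabs(1)])
  have "- x + - y \<le> mabs x + mabs y" by (rule add_mono[OF le_mabs(2) le_mabs(2)])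
  then have b: "- (x + y) \<le> mabs x + mabs y" by (simp add: algebra_simps)
  show ?thesis using a b unfolding mabs_def by auto
qed

lemma mabs_sum: "mabs (sum f S) \<le> (\<Sum>x\<in>S. mabs (f x))"
proof (induction S rule: infinite_finite_induct)
  case (insert x F)
  then show ?case using mabs_add[of "f x" "sum f F"] by (simp add: order_trans)
qed (auto simp: mabs_def)

lemma samesign_close:
  assumes "mabs (w - v) < mabs v" shows "samesign v w"
proof (cases "0 < v")
  case True
  then have m: "mabs v = v" by (simp add: mabs_pos)
  have "- mabs v < w - v" using assms mabs_lt by blast
  then have "- v < w - v" using m by simp
  then have "0 < w" by simp
  show ?thesis using True \<open>0 < w\<close> by (rule samesign_posI)
next
  case False
  show ?thesis
  proof (cases "v = 0")
    case True
    then show ?thesis using assms mabs_nonneg[of "w - v"] by (simp add: mabs_def)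
  next
    case F2: False
    then have v: "v < 0" using False by simp
    then have m: "mabs v = - v" by (simp add: mabs_neg)
    have "w - v < mabs v" using assms mabs_lt by blast
    then have "w - v < - v" using m by simp
    then have "w < 0" by simp
    show ?thesis using v \<open>w < 0\<close> by (rule samesign_negI)
  qed
qed

lemma Lb_zero: "(\<forall>t\<in>T j. a j t = 0) \<Longrightarrow> Lb T a j z = 0"
  unfolding Lb_def by simp

lemma evalP_nz: "\<not> nz r T a \<Longrightarrow> evalP r T (a, c) q = c"
  unfolding evalP_def nz_def by (simp add: Lb_zero)

definition Sab :: "nat \<Rightarrow> (nat \<Rightarrow> nat set) \<Rightarrow> (nat \<Rightarrow> nat \<Rightarrow> 'l) \<Rightarrow> 'l" where
  "Sab r T a = (\<Sum>i<r. \<Sum>t\<in>T i. \<bar>a i t\<bar>)"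

lemma Sab_nonneg: "0 \<le> Sab r T a"
  unfolding Sab_def by (intro sum_nonneg) auto

lemma eval_diff_bound:
  assumes close: "\<forall>i<r. \<forall>t\<in>T i. mabs (q i t - p i t) \<le> \<epsilon>"
  shows "mabs (evalP r T f q - evalP r T f p) \<le> scale (Sab r T (fst f)) \<epsilon>"
proof -
  have "evalP r T f q - evalP r T f p = (\<Sum>i<r. \<Sum>t\<in>T i. scale (fst f i t) (q i t - p i t))"
    unfolding evalP_def Lb_def by (simp add: sum_subtractf sdiff_r)
  then have "mabs (evalP r T f q - evalP r T f p) \<le> (\<Sum>i<r. mabs (\<Sum>t\<in>T i. scale (fst f i t) (q i t - p i t)))"
    using mabs_sum by simp
  also have "\<dots> \<le> (\<Sum>i<r. \<Sum>t\<in>T i. mabs (scale (fst f i t) (q i t - p i t)))"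
    by (intro sum_mono mabs_sum)
  also have "\<dots> = (\<Sum>i<r. \<Sum>t\<in>T i. scale \<bar>fst f i t\<bar> (mabs (q i t - p i t)))"
    by (simp add: sabs)
  also have "\<dots> \<le> (\<Sum>i<r. \<Sum>t\<in>T i. scale \<bar>fst f i t\<bar> \<epsilon>)"
    using close by (intro sum_mono smono_le) auto
  also have "\<dots> = scale (Sab r T (fst f)) \<epsilon>"
    unfolding Sab_def by (simp add: ssum_l)
  finally show ?thesis .
qed

lemma half_facts: "0 < x \<Longrightarrow> 0 < scale (inverse 2) x \<and> scale (inverse 2) x < x"
  using midpoint[of 0 x] by simp

lemma infinite_box:
  assumes t0: "t0 \<in> S" and z0: "z0 \<in> PiE S (\<lambda>_. UNIV)" and e: "0 < (\<epsilon>::'m)"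
  shows "infinite {z \<in> PiE S (\<lambda>_. UNIV). \<forall>t\<in>S. mabs (z t - z0 t) < \<epsilon>}"
proof -
  define h where "h n = (scale (inverse 2) ^^ n) \<epsilon>" for n
  have hpos: "0 < h n" for n
  proof (induction n)
    case 0 then show ?case using e by (simp add: h_def)
  next
    case (Suc n) then show ?case using half_facts[of "h n"] by (simp add: h_def)
  qed
  have hdec: "h (Suc n) < h n" for n
    using half_facts[OF hpos[of n]] by (simp add: h_def)
  have hle: "h n \<le> \<epsilon>" for n
  proof (induction n)
    case 0 then show ?case by (simp add: h_def)
  next
    case (Suc n) then show ?case using hdec[of n] by simp
  qed
  have hmono: "m < n \<Longrightarrow> h n < h m" for m n
  proof (induction n)
    case 0 then show ?case by simp
  next
    case (Suc n) then show ?case using hdec[of n] by (metis less_Suc_eq order.strict_trans)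
  qed
  have hinj: "inj h"
    by (rule injI) (metis hmono linorder_neqE_nat order_less_irrefl)
  define zf where "zf n = z0(t0 := z0 t0 + h (Suc n))" for n
  have "inj zf"
  proof (rule injI)
    fix m n assume "zf m = zf n"
    then have "z0 t0 + h (Suc m) = z0 t0 + h (Suc n)" unfolding zf_def by (metis fun_upd_same)
    then have "h (Suc m) = h (Suc n)" by simp
    then show "m = n" using hinj by (simp add: inj_eq)
  qed
  have "range zf \<subseteq> {z \<in> PiE S (\<lambda>_. UNIV). \<forall>t\<in>S. mabs (z t - z0 t) < \<epsilon>}"
  proof (intro subsetI)
    fix z assume "z \<in> range zf"
    then obtain n where zn: "z = zf n" by blast
    have hs: "h (Suc n) < \<epsilon>" using hdec[of n] hle[of n] by simp
    have "zf n \<in> PiE S (\<lambda>_. UNIV)" using z0 t0 unfolding zf_def by (auto simp: PiE_def extensional_def)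
    moreover have "\<forall>t\<in>S. mabs (zf n t - z0 t) < \<epsilon>"
      using hs hpos[of "Suc n"] e by (auto simp: zf_def mabs_def)
    ultimately show "z \<in> {z \<in> PiE S (\<lambda>_. UNIV). \<forall>t\<in>S. mabs (z t - z0 t) < \<epsilon>}" using zn by blast
  qed
  then show ?thesis using \<open>inj zf\<close> infinite_iff_countable_subset by blast
qed

end

context ovs
begin

lemma frac_lt1: "0 \<le> (S::'l) \<Longrightarrow> S * inverse (S + 1) < 1"
proof -
  assume S: "0 \<le> S"
  have pos: "0 < S + 1" using S one_pos by (simp add: add_nonneg_pos)
  then have ne: "S + 1 \<noteq> 0" by simp
  have "(S + 1) * inverse (S + 1) = 1" using ne by (simp add: right_inverse)
  then have "S * inverse (S + 1) + inverse (S + 1) = 1" by (simp add: distrib_right)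
  moreover have "0 < inverse (S + 1)" using inv_pos[OF pos] .
  ultimately show ?thesis by (metis less_add_same_cancel1)
qed

lemma samesign_refl: "samesign x x" by (simp add: samesign_def)

lemma covering:
  assumes e: "0 < (e::'m)" and ne: "\<forall>i<r. T i \<noteq> {}"
    and det: "detP r T Fs E" and sub: "E \<subseteq> Pts r T" and ni: "noinf r T E" and p: "p \<in> E"
  shows "\<exists>f\<in>set Fs. evalP r T f p = 0 \<and> nz r T (fst f)"
proof (rule ccontr)
  assume "\<not> ?thesis"
  then have H: "\<forall>f\<in>set Fs. evalP r T f p = 0 \<longrightarrow> \<not> nz r T (fst f)" by blast
  have pP: "p \<in> Pts r T" using p sub by blast
  define NZ where "NZ = {f\<in>set Fs. evalP r T f p \<noteq> 0}"
  define epsf where "epsf f = scale (inverse (Sab r T (fst f) + 1)) (mabs (evalP r T f p))" for f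
  define \<epsilon> where "\<epsilon> = Min (insert e (epsf ` NZ))"
  have finNZ: "finite NZ" by (simp add: NZ_def)
  have gpos: "0 < mabs (evalP r T f p)" if "f \<in> NZ" for f
    using that by (auto simp: NZ_def mabs_def)
  have Spos: "0 < Sab r T (fst f) + 1" for f
    using Sab_nonneg one_pos by (simp add: add_nonneg_pos)
  have epsfpos: "0 < epsf f" if "f \<in> NZ" for f
    unfolding epsf_def using spos[OF inv_pos[OF Spos] gpos[OF that]] .
  have epos: "0 < \<epsilon>"
  proof -
    have "finite (insert e (epsf ` NZ))" using finNZ by simp
    moreover have "insert e (epsf ` NZ) \<noteq> {}" by (rule insert_not_empty)
    ultimately have "\<epsilon> \<in> insert e (epsf ` NZ)" unfolding \<epsilon>_def by (rule Min_in)
    then have "\<epsilon> = e \<or> \<epsilon> \<in> epsf ` NZ" by (simp only: insert_iff)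
    then show ?thesis
    proof
      assume "\<epsilon> = e" then show ?thesis using e by (simp only:)
    next
      assume "\<epsilon> \<in> epsf ` NZ"
      then obtain f where f: "f \<in> NZ" "\<epsilon> = epsf f" by blast
      show ?thesis unfolding f(2) by (rule epsfpos[OF f(1)])
    qed
  qed
  have ele: "\<epsilon> \<le> epsf f" if "f \<in> NZ" for f
    unfolding \<epsilon>_def using finNZ that by (intro Min_le) auto
  have key: "scale (Sab r T (fst f)) \<epsilon> < mabs (evalP r T f p)" if f: "f \<in> NZ" for f
  proof -
    let ?S = "Sab r T (fst f)" and ?g = "mabs (evalP r T f p)"
    have "scale ?S \<epsilon> \<le> scale ?S (epsf f)" using Sab_nonneg ele[OF f] by (rule smono_le)
    also have "\<dots> = scale (?S * inverse (?S + 1)) ?g" unfolding epsf_def by (simp add: smult)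
    also have "\<dots> < scale 1 ?g" using frac_lt1[OF Sab_nonneg] gpos[OF f] by (rule smono_l)
    finally show ?thesis by simp
  qed
  define G where "G i = {z \<in> PiE (T i) (\<lambda>_. UNIV). \<forall>t\<in>T i. mabs (z t - p i t) < \<epsilon>}" for i
  have "\<forall>i<r. G i \<subseteq> PiE (T i) (\<lambda>_. UNIV) \<and> infinite (G i)"
  proof (intro allI impI conjI)
    fix i assume i: "i < r"
    show "G i \<subseteq> PiE (T i) (\<lambda>_. UNIV)" by (auto simp: G_def)
    obtain t0 where t0: "t0 \<in> T i" using ne i by blast
    have pi: "p i \<in> PiE (T i) (\<lambda>_. UNIV)" using PiE_mem[OF pP[unfolded Pts_def], of i] i by simp
    show "infinite (G i)" unfolding G_def by (rule infinite_box[OF t0 pi epos])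
  qed
  moreover have "PiE {..<r} G \<subseteq> E"
  proof
    fix q assume q: "q \<in> PiE {..<r} G"
    have "PiE {..<r} G \<subseteq> Pts r T" unfolding Pts_def by (rule PiE_mono) (simp add: G_def)
    then have qP: "q \<in> Pts r T" using q by blast
    have close: "\<forall>i<r. \<forall>t\<in>T i. mabs (q i t - p i t) \<le> \<epsilon>"
    proof (intro allI impI ballI)
      fix i t assume i: "i < r" and t: "t \<in> T i"
      have "q i \<in> G i" using q i by (simp add: PiE_mem)
      then have "mabs (q i t - p i t) < \<epsilon>" using t unfolding G_def by blast
      then show "mabs (q i t - p i t) \<le> \<epsilon>" by (rule less_imp_le)
    qed
    have "\<forall>f\<in>set Fs. samesign (evalP r T f p) (evalP r T f q)"
    proof
      fix f assume f: "f \<in> set Fs"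
      show "samesign (evalP r T f p) (evalP r T f q)"
      proof (cases "f \<in> NZ")
        case True
        have "mabs (evalP r T f q - evalP r T f p) \<le> scale (Sab r T (fst f)) \<epsilon>"
          using close by (rule eval_diff_bound)
        then have "mabs (evalP r T f q - evalP r T f p) < mabs (evalP r T f p)"
          using key[OF True] by (rule le_less_trans)
        then show ?thesis by (rule samesign_close)
      next
        case False
        then have "\<not> nz r T (fst f)" using H f by (auto simp: NZ_def)
        then have "evalP r T f q = snd f" "evalP r T f p = snd f"
          using evalP_nz[of r T "fst f" "snd f"] by simp_all
        then have "evalP r T f q = evalP r T f p" by simp
        then show ?thesis by (simp add: samesign_refl)
      qed
    qed
    then have "p \<in> E \<longleftrightarrow> q \<in> E" using det pP qP unfolding detP_def by blast
    then show "q \<in> E" using p by blast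
  qed
  ultimately show False using ni unfolding noinf_def by blast
qed

end

lemma PiEU_iff: "f \<in> PiE S (\<lambda>_. UNIV) \<longleftrightarrow> (\<forall>x. x \<notin> S \<longrightarrow> f x = undefined)"
  by (simp add: PiE_iff extensional_def)

lemma Pts_iff: "p \<in> Pts r T \<longleftrightarrow> (\<forall>i<r. \<forall>x. x \<notin> T i \<longrightarrow> p i x = undefined) \<and> (\<forall>i. r \<le> i \<longrightarrow> p i = undefined)"
  unfolding Pts_def PiE_iff PiEU_iff extensional_def by auto

context ovs
begin

definition Jset :: "nat \<Rightarrow> (nat \<Rightarrow> nat set) \<Rightarrow> (nat \<Rightarrow> nat \<Rightarrow> 'l) \<Rightarrow> nat set" where
  "Jset r T a = {j. j < r \<and> (\<exists>t\<in>T j. a j t \<noteq> 0)}"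

definition piv :: "(nat \<Rightarrow> nat set) \<Rightarrow> (nat \<Rightarrow> nat \<Rightarrow> 'l) \<Rightarrow> nat \<Rightarrow> nat" where
  "piv T a j = (SOME t. t \<in> T j \<and> a j t \<noteq> 0)"

definition Tp :: "nat \<Rightarrow> (nat \<Rightarrow> nat set) \<Rightarrow> (nat \<Rightarrow> nat \<Rightarrow> 'l) \<Rightarrow> nat \<Rightarrow> nat set" where
  "Tp r T a j = (if j \<in> Jset r T a then T j - {piv T a j} else T j)"

definition vv :: "nat \<Rightarrow> (nat \<Rightarrow> nat set) \<Rightarrow> (nat \<Rightarrow> nat \<Rightarrow> 'l) \<Rightarrow> nat \<Rightarrow> (nat \<Rightarrow> 'm) \<Rightarrow> 'm \<Rightarrow> 'm" where
  "vv r T a j z u = scale (inverse (a j (piv T a j))) (u - Lb (Tp r T a) a j z)"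

definition bins :: "nat \<Rightarrow> (nat \<Rightarrow> nat set) \<Rightarrow> (nat \<Rightarrow> nat \<Rightarrow> 'l) \<Rightarrow> (nat \<Rightarrow> 'm) \<Rightarrow> nat \<Rightarrow> (nat \<Rightarrow> 'm) \<Rightarrow> nat \<Rightarrow> 'm" where
  "bins r T a w j z = (if j \<in> Jset r T a then z(piv T a j := vv r T a j z (w j)) else z)"

definition ins :: "nat \<Rightarrow> (nat \<Rightarrow> nat set) \<Rightarrow> (nat \<Rightarrow> nat \<Rightarrow> 'l) \<Rightarrow> (nat \<Rightarrow> 'm) \<Rightarrow> (nat \<Rightarrow> nat \<Rightarrow> 'm) \<Rightarrow> nat \<Rightarrow> nat \<Rightarrow> 'm" where
  "ins r T a w y = (\<lambda>j. bins r T a w j (y j))"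

definition trl :: "nat \<Rightarrow> (nat \<Rightarrow> nat set) \<Rightarrow> (nat \<Rightarrow> nat \<Rightarrow> 'l) \<Rightarrow> (nat \<Rightarrow> nat \<Rightarrow> 'l) \<Rightarrow> nat \<Rightarrow> nat \<Rightarrow> 'l" where
  "trl r T a b = (\<lambda>j t. if j \<in> Jset r T a then b j t - b j (piv T a j) * inverse (a j (piv T a j)) * a j t else b j t)"

definition trF :: "nat \<Rightarrow> (nat \<Rightarrow> nat set) \<Rightarrow> (nat \<Rightarrow> nat \<Rightarrow> 'l) \<Rightarrow> (nat \<Rightarrow> 'm) \<Rightarrow> (nat \<Rightarrow> nat \<Rightarrow> 'l) \<times> 'm \<Rightarrow> (nat \<Rightarrow> nat \<Rightarrow> 'l) \<times> 'm" where
  "trF r T a w f = (trl r T a (fst f),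
     snd f + (\<Sum>j\<in>Jset r T a. scale (fst f j (piv T a j) * inverse (a j (piv T a j))) (w j)))"

lemma Jset_sub: "Jset r T a \<subseteq> {..<r}"
  by (auto simp: Jset_def)

lemma piv:
  assumes "j \<in> Jset r T a"
  shows "piv T a j \<in> T j" "a j (piv T a j) \<noteq> 0"
proof -
  have "\<exists>t. t \<in> T j \<and> a j t \<noteq> 0" using assms by (auto simp: Jset_def)
  then have "piv T a j \<in> T j \<and> a j (piv T a j) \<noteq> 0" unfolding piv_def by (rule someI_ex)
  then show "piv T a j \<in> T j" "a j (piv T a j) \<noteq> 0" by auto
qed

lemma Tp_J:
  assumes "j \<in> Jset r T a"
  shows "T j = insert (piv T a j) (Tp r T a j)" "piv T a j \<notin> Tp r T a j"
  using piv[OF assms] assms by (auto simp: Tp_def)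

lemma Tp_notJ: "j \<notin> Jset r T a \<Longrightarrow> Tp r T a j = T j"
  by (simp add: Tp_def)

lemma Tp_sub: "Tp r T a j \<subseteq> T j"
  by (auto simp: Tp_def)

lemma Lb_upd_out: "x \<notin> T j \<Longrightarrow> Lb T b j (z(x := v)) = Lb T b j z"
  unfolding Lb_def by (rule sum.cong) auto

lemma block:
  assumes J: "j \<in> Jset r T a" and fin: "finite (T j)"
  shows "Lb T b j (bins r T a w j z) = Lb (Tp r T a) (trl r T a b) j z + scale (b j (piv T a j) * inverse (a j (piv T a j))) (w j)"
proof -
  let ?s = "piv T a j" and ?T' = "Tp r T a"
  let ?v = "vv r T a j z (w j)"
  let ?c = "b j ?s * inverse (a j ?s)"
  have T: "T j = insert ?s (?T' j)" "?s \<notin> ?T' j" using Tp_J[OF J] by auto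
  have finT': "finite (?T' j)" using fin T(1) by (metis finite_insert)
  let ?X = "(\<Sum>t\<in>?T' j. scale (b j t) (z t))" and ?Y = "(\<Sum>t\<in>?T' j. scale (?c * a j t) (z t))"
  have "Lb T b j (bins r T a w j z) = (\<Sum>t\<in>insert ?s (?T' j). scale (b j t) ((z(?s := ?v)) t))"
    unfolding Lb_def bins_def using J T(1) by simp
  also have "\<dots> = scale (b j ?s) ?v + (\<Sum>t\<in>?T' j. scale (b j t) ((z(?s := ?v)) t))"
    using finT' T(2) by (simp add: sum.insert)
  also have "(\<Sum>t\<in>?T' j. scale (b j t) ((z(?s := ?v)) t)) = ?X"
    using T(2) by (intro sum.cong) auto
  also have "scale (b j ?s) ?v = scale ?c (w j) - ?Y"
    unfolding vv_def Lb_def by (simp add: smult[symmetric] sdiff_r ssum_r mult.assoc)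
  finally have e1: "Lb T b j (bins r T a w j z) = (scale ?c (w j) - ?Y) + ?X" .
  have e2: "Lb ?T' (trl r T a b) j z = ?X - ?Y"
    unfolding Lb_def trl_def using J by (simp add: sdiff_l sum_subtractf)
  show ?thesis unfolding e1 e2 by (simp add: algebra_simps)
qed

lemma block_notJ: "j \<notin> Jset r T a \<Longrightarrow> Lb T b j (bins r T a w j z) = Lb (Tp r T a) (trl r T a b) j z"
  unfolding Lb_def bins_def trl_def Tp_def by simp

lemma Lb_bins_a:
  assumes J: "j \<in> Jset r T a" and fin: "finite (T j)"
  shows "Lb T a j (bins r T a w j z) = w j"
proof -
  have a: "a j (piv T a j) \<noteq> 0" using piv[OF J] by simp
  have "Lb (Tp r T a) (trl r T a a) j z = 0"
    unfolding Lb_def trl_def using J a by (simp add: right_inverse)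
  moreover have "scale (a j (piv T a j) * inverse (a j (piv T a j))) (w j) = w j"
    using a by (simp add: right_inverse)
  ultimately show ?thesis using block[OF J fin, of a w z] by simp
qed

lemma evalP_ins:
  assumes fin: "\<forall>i<r. finite (T i)"
  shows "evalP r T f (ins r T a w y) = evalP r (Tp r T a) (trF r T a w f) y"
proof -
  let ?J = "Jset r T a"
  let ?c = "\<lambda>j. scale (fst f j (piv T a j) * inverse (a j (piv T a j))) (w j)"
  have "(\<Sum>i<r. Lb T (fst f) i (bins r T a w i (y i))) =
        (\<Sum>i<r. Lb (Tp r T a) (trl r T a (fst f)) i (y i) + (if i \<in> ?J then ?c i else 0))"
  proof (rule sum.cong)
    fix i assume "i \<in> {..<r}"
    then show "Lb T (fst f) i (bins r T a w i (y i)) = Lb (Tp r T a) (trl r T a (fst f)) i (y i) + (if i \<in> ?J then ?c i else 0)"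
      using block[of i r T a "fst f" w "y i"] block_notJ[of i r T a "fst f" w "y i"] fin by auto
  qed simp
  also have "\<dots> = (\<Sum>i<r. Lb (Tp r T a) (trl r T a (fst f)) i (y i)) + (\<Sum>i\<in>?J. ?c i)"
    using Jset_sub[of r T a] by (simp add: sum.distrib sum.If_cases Int_absorb1)
  finally show ?thesis unfolding evalP_def ins_def trF_def by (simp add: algebra_simps)
qed

lemma bins_PiE:
  assumes "z \<in> PiE (Tp r T a j) (\<lambda>_. UNIV)"
  shows "bins r T a w j z \<in> PiE (T j) (\<lambda>_. UNIV)"
proof (cases "j \<in> Jset r T a")
  case True
  then show ?thesis using assms piv[OF True] Tp_J[OF True] unfolding bins_def PiEU_iff by auto
next
  case False
  then show ?thesis using assms Tp_notJ[OF False] unfolding bins_def by simp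
qed

lemma bins_inj:
  "inj_on (bins r T a w j) (PiE (Tp r T a j) (\<lambda>_. UNIV))"
proof (rule inj_onI)
  fix z z' assume z: "z \<in> PiE (Tp r T a j) (\<lambda>_. UNIV)" and z': "z' \<in> PiE (Tp r T a j) (\<lambda>_. UNIV)"
    and eq: "bins r T a w j z = bins r T a w j z'"
  show "z = z'"
  proof (cases "j \<in> Jset r T a")
    case True
    show ?thesis
    proof
      fix t
      show "z t = z' t"
      proof (cases "t = piv T a j")
        case True
        then show ?thesis using z z' Tp_J[OF \<open>j \<in> Jset r T a\<close>] unfolding PiEU_iff by auto
      next
        case False
        then show ?thesis using eq \<open>j \<in> Jset r T a\<close> unfolding bins_def by (metis fun_upd_other)
      qed
    qed
  next
    case False
    then show ?thesis using eq unfolding bins_def by simp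
  qed
qed

lemma ins_Pts:
  assumes "y \<in> Pts r (Tp r T a)"
  shows "ins r T a w y \<in> Pts r T"
proof -
  have "ins r T a w y i \<in> PiE (T i) (\<lambda>_. UNIV)" if "i < r" for i
    unfolding ins_def using bins_PiE[OF PiE_mem[OF assms[unfolded Pts_def]]] that by simp
  moreover have "ins r T a w y i = undefined" if "i \<notin> {..<r}" for i
  proof -
    have "i \<notin> Jset r T a" using that Jset_sub by blast
    moreover have "y i = undefined" using assms that unfolding Pts_def PiE_iff extensional_def by blast
    ultimately show ?thesis unfolding ins_def bins_def by simp
  qed
  ultimately show ?thesis unfolding Pts_def PiE_iff extensional_def by blast
qed

lemma ins_inj: "inj_on (ins r T a w) (Pts r (Tp r T a))"
proof (rule inj_onI)
  fix y y' assume y: "y \<in> Pts r (Tp r T a)" and y': "y' \<in> Pts r (Tp r T a)"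
    and eq: "ins r T a w y = ins r T a w y'"
  show "y = y'"
  proof
    fix i
    show "y i = y' i"
    proof (cases "i < r")
      case True
      have "bins r T a w i (y i) = bins r T a w i (y' i)" using eq unfolding ins_def by metis
      moreover have "y i \<in> PiE (Tp r T a i) (\<lambda>_. UNIV)"
        using PiE_mem[OF y[unfolded Pts_def], of i] True by simp
      moreover have "y' i \<in> PiE (Tp r T a i) (\<lambda>_. UNIV)"
        using PiE_mem[OF y'[unfolded Pts_def], of i] True by simp
      ultimately show ?thesis using bins_inj[of r T a w i] by (meson inj_onD)
    next
      case False
      then show ?thesis using y y' unfolding Pts_def PiE_iff extensional_def by simp
    qed
  qed
qed

lemma ins_surj:
  assumes p: "p \<in> Pts r T" and fin: "\<forall>i<r. finite (T i)"
    and L: "\<forall>j\<in>Jset r T a. Lb T a j (p j) = w j"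
  shows "\<exists>y\<in>Pts r (Tp r T a). ins r T a w y = p"
proof -
  define y where "y j = (if j \<in> Jset r T a then (p j)(piv T a j := undefined) else p j)" for j
  have yP: "y \<in> Pts r (Tp r T a)"
    unfolding Pts_iff
  proof (intro conjI allI impI)
    fix i x assume i: "i < r" and x: "x \<notin> Tp r T a i"
    show "y i x = undefined"
    proof (cases "i \<in> Jset r T a")
      case True
      then show ?thesis using p i x unfolding y_def Pts_iff Tp_def by auto
    next
      case False
      then show ?thesis using p i x unfolding y_def Pts_iff Tp_def by auto
    qed
  next
    fix i assume "r \<le> i"
    then show "y i = undefined" using p Jset_sub[of r T a] unfolding y_def Pts_iff by auto
  qed
  have "ins r T a w y = p"
  proof
    fix j
    show "ins r T a w y j = p j"
    proof (cases "j \<in> Jset r T a")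
      case J: True
      let ?s = "piv T a j"
      have jr: "j < r" using J Jset_sub by blast
      have T: "T j = insert ?s (Tp r T a j)" "?s \<notin> Tp r T a j" using Tp_J[OF J] by auto
      have a: "a j ?s \<noteq> 0" using piv[OF J] by simp
      have finT': "finite (Tp r T a j)" using fin jr Tp_sub by (meson finite_subset)
      have "w j = Lb T a j (p j)" using L J by simp
      also have "\<dots> = scale (a j ?s) (p j ?s) + (\<Sum>t\<in>Tp r T a j. scale (a j t) (p j t))"
        unfolding Lb_def using T finT' by (simp add: sum.insert)
      also have "(\<Sum>t\<in>Tp r T a j. scale (a j t) (p j t)) = Lb (Tp r T a) a j (y j)"
        unfolding Lb_def y_def using J T(2) by (auto intro!: sum.cong)
      finally have "w j - Lb (Tp r T a) a j (y j) = scale (a j ?s) (p j ?s)" by simp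
      then have "vv r T a j (y j) (w j) = p j ?s" unfolding vv_def using sinv_r[OF a] by simp
      then show ?thesis unfolding ins_def bins_def y_def using J by auto
    next
      case False
      then show ?thesis unfolding ins_def bins_def y_def by simp
    qed
  qed
  then show ?thesis using yP by blast
qed

end

context ovs
begin

definition Bp :: "nat \<Rightarrow> (nat \<Rightarrow> nat set) \<Rightarrow> (nat \<Rightarrow> nat \<Rightarrow> 'l) \<Rightarrow> (nat \<Rightarrow> 'm) \<Rightarrow> (nat \<Rightarrow> (nat \<Rightarrow> 'm) set) \<Rightarrow> nat \<Rightarrow> (nat \<Rightarrow> 'm) set" where
  "Bp r T a w B j = {z \<in> PiE (Tp r T a j) (\<lambda>_. UNIV). bins r T a w j z \<in> B j}"

definition Bw :: "nat \<Rightarrow> (nat \<Rightarrow> nat set) \<Rightarrow> (nat \<Rightarrow> nat \<Rightarrow> 'l) \<Rightarrow> (nat \<Rightarrow> 'm) \<Rightarrow> (nat \<Rightarrow> (nat \<Rightarrow> 'm) set) \<Rightarrow> nat \<Rightarrow> (nat \<Rightarrow> 'm) set" where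
  "Bw r T a w B j = (if j \<in> Jset r T a then {z \<in> B j. Lb T a j z = w j} else B j)"

lemma ins_grid:
  assumes y: "y \<in> Pts r (Tp r T a)"
  shows "ins r T a w y \<in> PiE {..<r} B \<longleftrightarrow> y \<in> PiE {..<r} (Bp r T a w B)"
proof -
  have yi: "y i \<in> PiE (Tp r T a i) (\<lambda>_. UNIV)" if "i < r" for i
    using PiE_mem[OF y[unfolded Pts_def], of i] that by simp
  have yo: "y i = undefined" if "i \<notin> {..<r}" for i
    using y that unfolding Pts_def PiE_iff extensional_def by blast
  have io: "ins r T a w y i = undefined" if "i \<notin> {..<r}" for i
    using ins_Pts[OF y, of w] that unfolding Pts_def PiE_iff extensional_def by blast
  show ?thesis
  proof
    assume "ins r T a w y \<in> PiE {..<r} B"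
    then have "bins r T a w i (y i) \<in> B i" if "i < r" for i
      using PiE_mem[of "ins r T a w y" "{..<r}" B i] that unfolding ins_def by simp
    then show "y \<in> PiE {..<r} (Bp r T a w B)"
      unfolding PiE_iff extensional_def Bp_def using yi yo by blast
  next
    assume "y \<in> PiE {..<r} (Bp r T a w B)"
    then have "bins r T a w i (y i) \<in> B i" if "i < r" for i
      using PiE_mem[of y "{..<r}" "Bp r T a w B" i] that unfolding Bp_def by simp
    then show "ins r T a w y \<in> PiE {..<r} B"
      unfolding PiE_iff extensional_def using io unfolding ins_def by auto
  qed
qed

lemma Bp_card:
  assumes "finite (B j)" "finite (T j)"
  shows "finite (Bp r T a w B j) \<and> card (Bp r T a w B j) \<le> card (Bw r T a w B j)"
proof -
  have inj: "inj_on (bins r T a w j) (Bp r T a w B j)"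
    using bins_inj[of r T a w j] unfolding Bp_def by (rule inj_on_subset) blast
  have img: "bins r T a w j ` Bp r T a w B j \<subseteq> Bw r T a w B j"
  proof
    fix x assume "x \<in> bins r T a w j ` Bp r T a w B j"
    then obtain z where z: "z \<in> Bp r T a w B j" "x = bins r T a w j z" by blast
    then have xB: "x \<in> B j" unfolding Bp_def by simp
    show "x \<in> Bw r T a w B j"
    proof (cases "j \<in> Jset r T a")
      case True
      then have "Lb T a j x = w j" using Lb_bins_a[OF True assms(2)] z(2) by simp
      then show ?thesis using True xB unfolding Bw_def by simp
    next
      case False
      then show ?thesis using xB unfolding Bw_def by simp
    qed
  qed
  have finBw: "finite (Bw r T a w B j)" using assms(1) unfolding Bw_def by simp
  have "finite (Bp r T a w B j)"
    using finite_imageD[OF finite_subset[OF img finBw] inj] .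
  moreover have "card (Bp r T a w B j) \<le> card (Bw r T a w B j)"
    using card_inj_on_le[OF inj img finBw] .
  ultimately show ?thesis by blast
qed

lemma noinf_tr:
  assumes ni: "noinf r T E"
  shows "noinf r (Tp r T a) {y \<in> Pts r (Tp r T a). ins r T a w y \<in> E}"
  unfolding noinf_def
proof
  assume "\<exists>G. (\<forall>i<r. G i \<subseteq> PiE (Tp r T a i) (\<lambda>_. UNIV) \<and> infinite (G i)) \<and>
            PiE {..<r} G \<subseteq> {y \<in> Pts r (Tp r T a). ins r T a w y \<in> E}"
  then obtain G where G: "\<forall>i<r. G i \<subseteq> PiE (Tp r T a i) (\<lambda>_. UNIV) \<and> infinite (G i)"
    and GE: "PiE {..<r} G \<subseteq> {y \<in> Pts r (Tp r T a). ins r T a w y \<in> E}" by blast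
  define H where "H i = bins r T a w i ` G i" for i
  have "\<forall>i<r. H i \<subseteq> PiE (T i) (\<lambda>_. UNIV) \<and> infinite (H i)"
  proof (intro allI impI conjI)
    fix i assume i: "i < r"
    show "H i \<subseteq> PiE (T i) (\<lambda>_. UNIV)" unfolding H_def using G i bins_PiE by blast
    have "inj_on (bins r T a w i) (G i)" using bins_inj G i by (meson inj_on_subset)
    then show "infinite (H i)" unfolding H_def using G i finite_imageD by blast
  qed
  moreover have "PiE {..<r} H \<subseteq> E"
  proof
    fix q assume q: "q \<in> PiE {..<r} H"
    define y where "y j = (if j < r then (SOME z. z \<in> G j \<and> q j = bins r T a w j z) else undefined)" for j
    have yj: "y j \<in> G j \<and> q j = bins r T a w j (y j)" if "j < r" for j
    proof -
      have "q j \<in> H j" using q that by (simp add: PiE_mem)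
      then have "\<exists>z. z \<in> G j \<and> q j = bins r T a w j z" unfolding H_def by blast
      then have "(SOME z. z \<in> G j \<and> q j = bins r T a w j z) \<in> G j \<and> q j = bins r T a w j (SOME z. z \<in> G j \<and> q j = bins r T a w j z)"
        by (rule someI_ex)
      then show ?thesis unfolding y_def using that by simp
    qed
    have "y \<in> PiE {..<r} G" unfolding PiE_iff extensional_def using yj by (simp add: y_def)
    then have "y \<in> Pts r (Tp r T a)" "ins r T a w y \<in> E" using GE by blast+
    moreover have "ins r T a w y = q"
    proof
      fix j
      show "ins r T a w y j = q j"
      proof (cases "j < r")
        case True then show ?thesis using yj unfolding ins_def by simp
      next
        case False
        then have "j \<notin> Jset r T a" using Jset_sub by blast
        moreover have "q j = undefined" using q False unfolding PiE_iff extensional_def by simp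
        ultimately show ?thesis using False unfolding ins_def bins_def y_def by simp
      qed
    qed
    ultimately show "q \<in> E" by simp
  qed
  ultimately show False using ni unfolding noinf_def by blast
qed

lemma det_tr:
  assumes fin: "\<forall>i<r. finite (T i)" and det: "detP r T Fs E"
  shows "detP r (Tp r T a) (map (trF r T a w) Fs) {y \<in> Pts r (Tp r T a). ins r T a w y \<in> E}"
  unfolding detP_def
proof (intro ballI impI)
  fix y y' assume y: "y \<in> Pts r (Tp r T a)" and y': "y' \<in> Pts r (Tp r T a)"
    and s: "\<forall>f\<in>set (map (trF r T a w) Fs). samesign (evalP r (Tp r T a) f y) (evalP r (Tp r T a) f y')"
  have "\<forall>f\<in>set Fs. samesign (evalP r T f (ins r T a w y)) (evalP r T f (ins r T a w y'))"
    using s evalP_ins[OF fin] by simp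
  then have "ins r T a w y \<in> E \<longleftrightarrow> ins r T a w y' \<in> E"
    using det ins_Pts[OF y] ins_Pts[OF y'] unfolding detP_def by blast
  then show "(y \<in> {y \<in> Pts r (Tp r T a). ins r T a w y \<in> E}) = (y' \<in> {y \<in> Pts r (Tp r T a). ins r T a w y \<in> E})"
    using y y' by blast
qed

lemma map_trF: "map fst (map (trF r T a w) Fs) = map (trl r T a) (map fst Fs)"
  by (simp add: trF_def)

end

lemma disj_keys:
  fixes w w' :: "nat \<Rightarrow> 'm::ab_group_add"
  assumes finJ: "finite J" and Jr: "J \<subseteq> {..<r}" and sums: "(\<Sum>j\<in>J. w j) = (\<Sum>j\<in>J. w' j)"
    and out: "\<forall>j. j \<notin> J \<longrightarrow> w j = w' j" and ne: "w \<noteq> w'"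
    and I: "I \<subseteq> {..<r}" "card I = r - 1"
  shows "\<exists>i\<in>I. i \<in> J \<and> w i \<noteq> w' i"
proof -
  obtain j0 where j0: "j0 \<in> J" "w j0 \<noteq> w' j0" using out ne by (metis ext)
  show ?thesis
  proof (cases "j0 \<in> I")
    case True then show ?thesis using j0 by blast
  next
    case False
    have j0r: "j0 < r" using j0 Jr by blast
    have Isub: "I \<subseteq> {..<r} - {j0}" using I False by blast
    have "card ({..<r} - {j0}) = r - 1" using j0r by simp
    then have Ieq: "I = {..<r} - {j0}"
      using card_subset_eq[OF _ Isub] I(2) by simp
    have "\<exists>j\<in>J - {j0}. w j \<noteq> w' j"
    proof (rule ccontr)
      assume "\<not> ?thesis"
      then have "(\<Sum>j\<in>J - {j0}. w j) = (\<Sum>j\<in>J - {j0}. w' j)" by (intro sum.cong) auto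
      moreover have "(\<Sum>j\<in>J. w j) = w j0 + (\<Sum>j\<in>J - {j0}. w j)" using finJ j0(1) by (simp add: sum.remove)
      moreover have "(\<Sum>j\<in>J. w' j) = w' j0 + (\<Sum>j\<in>J - {j0}. w' j)" using finJ j0(1) by (simp add: sum.remove)
      ultimately have "w j0 = w' j0" using sums by simp
      then show False using j0 by simp
    qed
    then obtain j where "j \<in> J" "j \<noteq> j0" "w j \<noteq> w' j" by blast
    moreover have "j \<in> I" using Ieq \<open>j \<in> J\<close> \<open>j \<noteq> j0\<close> Jr by blast
    ultimately show ?thesis by blast
  qed
qed

context ovs
begin

lemma slice_bound:
  assumes fin: "\<forall>i<r. finite (T i)"
    and sub: "E \<subseteq> Pts r T" and det: "detP r T Fs E" and ni: "noinf r T E"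
    and fac: "factors r T B"
    and Q: "\<forall>Fs' E'. map fst Fs' = map (trl r T a) (map fst Fs) \<longrightarrow> E' \<subseteq> Pts r (Tp r T a) \<longrightarrow>
              detP r (Tp r T a) Fs' E' \<longrightarrow> noinf r (Tp r T a) E' \<longrightarrow>
              (\<forall>B'. factors r (Tp r T a) B' \<longrightarrow> real (card (E' \<inter> PiE {..<r} B')) \<le> \<alpha>' * deltaP r B')"
    and a0: "0 \<le> \<alpha>'"
  shows "real (card {p \<in> E \<inter> PiE {..<r} B. evalP r T (a, c) p = 0}) \<le> \<alpha>' * deltaP r B"
proof -
  define J where "J = Jset r T a"
  define \<kappa> where "\<kappa> p = (\<lambda>j. if j \<in> J then Lb T a j (p j) else 0)" for p :: "nat \<Rightarrow> nat \<Rightarrow> 'm"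
  define P where "P = {p \<in> E \<inter> PiE {..<r} B. evalP r T (a, c) p = 0}"
  define W where "W = \<kappa> ` P"
  have finB: "\<forall>i<r. finite (B i)" using fac by (simp add: factors_def)
  have finG: "finite (PiE {..<r} B)" using finB by (intro finite_PiE) auto
  have finP: "finite P" unfolding P_def using finG by (rule rev_finite_subset) blast
  have finW: "finite W" unfolding W_def using finP by simp
  have Jr: "J \<subseteq> {..<r}" unfolding J_def by (rule Jset_sub)
  have finJ: "finite J" using Jr finite_subset by blast
  have sumJ: "(\<Sum>j\<in>J. \<kappa> p j) = - c" if p: "p \<in> P" for p
  proof -
    have "(\<Sum>i<r. Lb T a i (p i)) = (\<Sum>i\<in>J. Lb T a i (p i))"
    proof (rule sum.mono_neutral_right)
      show "finite {..<r}" by simp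
      show "J \<subseteq> {..<r}" by (rule Jr)
      show "\<forall>i\<in>{..<r} - J. Lb T a i (p i) = 0"
      proof
        fix i assume "i \<in> {..<r} - J"
        then have "\<forall>t\<in>T i. a i t = 0" unfolding J_def Jset_def by auto
        then show "Lb T a i (p i) = 0" by (rule Lb_zero)
      qed
    qed
    also have "\<dots> = (\<Sum>j\<in>J. \<kappa> p j)" unfolding \<kappa>_def by (rule sum.cong) auto
    finally have "(\<Sum>j\<in>J. \<kappa> p j) + c = 0" using p unfolding P_def evalP_def by simp
    then show ?thesis by (simp add: eq_neg_iff_add_eq_0)
  qed
  define E' where "E' w = {y \<in> Pts r (Tp r T a). ins r T a w y \<in> E}" for w
  have bw: "real (card {p\<in>P. \<kappa> p = w}) \<le> \<alpha>' * deltaP r (Bw r T a w B)" for w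
  proof -
    have Bpc: "\<forall>i<r. finite (Bp r T a w B i) \<and> card (Bp r T a w B i) \<le> card (Bw r T a w B i)"
      using Bp_card finB fin by blast
    have facB': "factors r (Tp r T a) (Bp r T a w B)"
      unfolding factors_def
    proof (intro allI impI conjI)
      fix i assume "i < r"
      show "Bp r T a w B i \<subseteq> PiE (Tp r T a i) (\<lambda>_. UNIV)" unfolding Bp_def by (rule Collect_restrict)
      show "finite (Bp r T a w B i)" using Bpc \<open>i < r\<close> by blast
    qed
    have finG': "finite (PiE {..<r} (Bp r T a w B))" using Bpc by (intro finite_PiE) auto
    have "real (card (E' w \<inter> PiE {..<r} (Bp r T a w B))) \<le> \<alpha>' * deltaP r (Bp r T a w B)"
    proof -
      have "{y \<in> Pts r (Tp r T a). ins r T a w y \<in> E} \<subseteq> Pts r (Tp r T a)" by blast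
      from Q[rule_format, OF map_trF[of r T a w Fs] this det_tr[OF fin det, of a w] noinf_tr[OF ni, of a w] facB']
      show ?thesis unfolding E'_def .
    qed
    also have "\<dots> \<le> \<alpha>' * deltaP r (Bw r T a w B)"
      using Bpc deltaP_mono[of r "Bp r T a w B" "Bw r T a w B"] a0 by (simp add: mult_left_mono)
    finally have A: "real (card (E' w \<inter> PiE {..<r} (Bp r T a w B))) \<le> \<alpha>' * deltaP r (Bw r T a w B)" .
    have "{p\<in>P. \<kappa> p = w} \<subseteq> ins r T a w ` (E' w \<inter> PiE {..<r} (Bp r T a w B))"
    proof
      fix p assume "p \<in> {p\<in>P. \<kappa> p = w}"
      then have pP: "p \<in> P" and kp: "\<kappa> p = w" by auto
      have pPts: "p \<in> Pts r T" using pP sub unfolding P_def by blast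
      have L: "\<forall>j\<in>Jset r T a. Lb T a j (p j) = w j"
      proof
        fix j assume "j \<in> Jset r T a"
        then have "\<kappa> p j = Lb T a j (p j)" unfolding \<kappa>_def J_def by simp
        then show "Lb T a j (p j) = w j" using kp by simp
      qed
      obtain y where y: "y \<in> Pts r (Tp r T a)" "ins r T a w y = p"
        using ins_surj[OF pPts fin L] by blast
      have pE: "p \<in> E" and pG: "p \<in> PiE {..<r} B" using pP unfolding P_def by blast+
      have "y \<in> E' w" unfolding E'_def using y pE by simp
      moreover have "y \<in> PiE {..<r} (Bp r T a w B)"
        using ins_grid[OF y(1), of w B] y(2) pG by simp
      ultimately show "p \<in> ins r T a w ` (E' w \<inter> PiE {..<r} (Bp r T a w B))" using y(2) by blast
    qed
    then have "card {p\<in>P. \<kappa> p = w} \<le> card (ins r T a w ` (E' w \<inter> PiE {..<r} (Bp r T a w B)))"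
      using finG' by (intro card_mono) auto
    also have "\<dots> \<le> card (E' w \<inter> PiE {..<r} (Bp r T a w B))" by (rule card_image_le) (use finG' in auto)
    finally show ?thesis using A by linarith
  qed
  have "P = (\<Union>w\<in>W. {p\<in>P. \<kappa> p = w})" unfolding W_def by auto
  then have "card P \<le> (\<Sum>w\<in>W. card {p\<in>P. \<kappa> p = w})"
    using card_UN_le[OF finW, of "\<lambda>w. {p\<in>P. \<kappa> p = w}"] by simp
  then have "real (card P) \<le> real (\<Sum>w\<in>W. card {p\<in>P. \<kappa> p = w})" by (rule of_nat_mono)
  also have "\<dots> = (\<Sum>w\<in>W. real (card {p\<in>P. \<kappa> p = w}))" by (rule of_nat_sum)
  also have "\<dots> \<le> (\<Sum>w\<in>W. \<alpha>' * deltaP r (Bw r T a w B))" by (intro sum_mono bw)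
  also have "\<dots> = \<alpha>' * (\<Sum>w\<in>W. deltaP r (Bw r T a w B))" by (simp add: sum_distrib_left)
  also have "\<dots> \<le> \<alpha>' * deltaP r B"
  proof (intro mult_left_mono a0 delta_sum finW)
    show "\<forall>w\<in>W. \<forall>i<r. Bw r T a w B i \<subseteq> B i"
    proof (intro ballI allI impI)
      fix w i
      show "Bw r T a w B i \<subseteq> B i" unfolding Bw_def by (cases "i \<in> Jset r T a") simp_all
    qed
    show "\<forall>i<r. finite (B i)" by (rule finB)
    show "\<forall>w\<in>W. \<forall>w'\<in>W. w \<noteq> w' \<longrightarrow> (\<forall>I. I \<subseteq> {..<r} \<and> card I = r - 1 \<longrightarrow> (\<exists>i\<in>I. Bw r T a w B i \<inter> Bw r T a w' B i = {}))"
    proof (intro ballI impI allI)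
      fix w w' I assume w: "w \<in> W" and w': "w' \<in> W" and ne: "w \<noteq> w'" and I: "I \<subseteq> {..<r} \<and> card I = r - 1"
      obtain p p' where p: "p \<in> P" "w = \<kappa> p" and p': "p' \<in> P" "w' = \<kappa> p'" using w w' unfolding W_def by blast
      have sums: "(\<Sum>j\<in>J. w j) = (\<Sum>j\<in>J. w' j)" using sumJ[OF p(1)] sumJ[OF p'(1)] p(2) p'(2) by simp
      have out: "\<forall>j. j \<notin> J \<longrightarrow> w j = w' j" using p(2) p'(2) unfolding \<kappa>_def by simp
      obtain i where i: "i \<in> I" "i \<in> J" "w i \<noteq> w' i"
        using disj_keys[OF finJ Jr sums out ne] I by blast
      have iJ: "i \<in> Jset r T a" using i(2) unfolding J_def .
      have "Bw r T a w B i \<inter> Bw r T a w' B i = {}"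
        unfolding Bw_def using iJ i(3) by auto
      then show "\<exists>i\<in>I. Bw r T a w B i \<inter> Bw r T a w' B i = {}" using i(1) by blast
    qed
  qed
  finally show ?thesis unfolding P_def .
qed

end

context ovs
begin

lemma trivial_case:
  assumes fin: "\<forall>i<r. finite (B i)" and fac: "factors r T B"
    and triv: "r = 0 \<or> (\<exists>j<r. card (B j) \<le> 1)"
  shows "real (card (E \<inter> PiE {..<r} B)) \<le> deltaP r B"
proof -
  have finG: "finite (PiE {..<r} B)" using fin by (intro finite_PiE) auto
  have "real (card (E \<inter> PiE {..<r} B)) \<le> real (card (PiE {..<r} B))"
    using finG by (simp add: card_mono)
  also have "\<dots> \<le> deltaP r B"
    using triv
  proof
    assume "r = 0" then show ?thesis using grid_r0 by simp
  next
    assume "\<exists>j<r. card (B j) \<le> 1"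
    then obtain j where "j < r" "card (B j) \<le> 1" by blast
    then show ?thesis using grid_small[OF fin] by blast
  qed
  finally show ?thesis .
qed

lemma main_ind:
  assumes e: "0 < (e::'m)"
  shows "\<forall>r T A. (\<Sum>i<r. card (T i)) = D \<longrightarrow> (\<forall>i<r. finite (T i)) \<longrightarrow>
     (\<exists>\<alpha>>0. \<forall>Fs E. map fst Fs = A \<longrightarrow> E \<subseteq> Pts r T \<longrightarrow> detP r T Fs E \<longrightarrow> noinf r T E \<longrightarrow>
        (\<forall>B. factors r T B \<longrightarrow> real (card (E \<inter> PiE {..<r} B)) \<le> \<alpha> * deltaP r B))"
proof (induction D rule: less_induct)
  case (less D)
  show ?case
  proof (intro allI impI)
    fix r :: nat and T :: "nat \<Rightarrow> nat set" and A :: "(nat \<Rightarrow> nat \<Rightarrow> 'l) list"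
    assume D: "(\<Sum>i<r. card (T i)) = D" and fin: "\<forall>i<r. finite (T i)"
    show "\<exists>\<alpha>>0. \<forall>Fs E. map fst Fs = A \<longrightarrow> E \<subseteq> Pts r T \<longrightarrow> detP r T Fs E \<longrightarrow> noinf r T E \<longrightarrow>
        (\<forall>B. factors r T B \<longrightarrow> real (card (E \<inter> PiE {..<r} B)) \<le> \<alpha> * deltaP r B)"
    proof (cases "r = 0 \<or> (\<exists>j<r. T j = {})")
      case True
      show ?thesis
      proof (intro exI[of _ "1::real"] conjI allI impI)
        show "(0::real) < 1" by simp
        fix Fs :: "((nat \<Rightarrow> nat \<Rightarrow> 'l) \<times> 'm) list" and E :: "(nat \<Rightarrow> nat \<Rightarrow> 'm) set" and B :: "nat \<Rightarrow> (nat \<Rightarrow> 'm) set"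
        assume fac: "factors r T B"
        have finB: "\<forall>i<r. finite (B i)" using fac by (simp add: factors_def)
        have "r = 0 \<or> (\<exists>j<r. card (B j) \<le> 1)"
          using True
        proof
          assume "r = 0" then show ?thesis by simp
        next
          assume "\<exists>j<r. T j = {}"
          then obtain j where j: "j < r" "T j = {}" by blast
          have "B j \<subseteq> PiE (T j) (\<lambda>_. UNIV::'m set)" using fac j(1) unfolding factors_def by blast
          then have "B j \<subseteq> PiE {} (\<lambda>_. UNIV::'m set)" using j(2) by simp
          then have "card (B j) \<le> card (PiE {} (\<lambda>_. UNIV::'m set))" using card_mono[of "PiE {} (\<lambda>_. UNIV::'m set)" "B j"] by simp
          then have "card (B j) \<le> 1" by simp
          then show ?thesis using j by blast
        qed
        then show "real (card (E \<inter> PiE {..<r} B)) \<le> 1 * deltaP r B"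
          using trivial_case[OF finB fac] by simp
      qed
    next
      case False
      then have ne: "\<forall>i<r. T i \<noteq> {}" by blast
      define K0 where "K0 = {k. k < length A \<and> nz r T (A ! k)}"
      have finK: "finite K0" unfolding K0_def by simp
      have IHk: "\<forall>k\<in>K0. \<exists>\<alpha>>0. \<forall>Fs E. map fst Fs = map (trl r T (A ! k)) A \<longrightarrow> E \<subseteq> Pts r (Tp r T (A ! k)) \<longrightarrow>
          detP r (Tp r T (A ! k)) Fs E \<longrightarrow> noinf r (Tp r T (A ! k)) E \<longrightarrow>
          (\<forall>B. factors r (Tp r T (A ! k)) B \<longrightarrow> real (card (E \<inter> PiE {..<r} B)) \<le> \<alpha> * deltaP r B)"
      proof
        fix k assume k: "k \<in> K0"
        let ?a = "A ! k"
        have "nz r T ?a" using k unfolding K0_def by simp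
        then obtain j t where jt: "j < r" "t \<in> T j" "?a j t \<noteq> 0" unfolding nz_def by blast
        then have j: "j \<in> Jset r T ?a" unfolding Jset_def by blast
        have lt: "(\<Sum>i<r. card (Tp r T ?a i)) < D"
          unfolding D[symmetric]
        proof (rule sum_strict_mono_ex1)
          show "finite {..<r}" by simp
          show "\<forall>i\<in>{..<r}. card (Tp r T ?a i) \<le> card (T i)"
            using fin Tp_sub card_mono by (metis lessThan_iff)
          have "card (T j) = Suc (card (Tp r T ?a j))"
            using Tp_J[OF j] fin jt(1) by (metis card_insert_disjoint finite_insert)
          then have "card (Tp r T ?a j) < card (T j)" by simp
          moreover have "j \<in> {..<r}" using jt(1) by simp
          ultimately show "\<exists>i\<in>{..<r}. card (Tp r T ?a i) < card (T i)" by blast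
        qed
        have finT': "\<forall>i<r. finite (Tp r T ?a i)" using fin Tp_sub finite_subset by metis
        show "\<exists>\<alpha>>0. \<forall>Fs E. map fst Fs = map (trl r T ?a) A \<longrightarrow> E \<subseteq> Pts r (Tp r T ?a) \<longrightarrow>
          detP r (Tp r T ?a) Fs E \<longrightarrow> noinf r (Tp r T ?a) E \<longrightarrow>
          (\<forall>B. factors r (Tp r T ?a) B \<longrightarrow> real (card (E \<inter> PiE {..<r} B)) \<le> \<alpha> * deltaP r B)"
          using less.IH[OF lt, rule_format, where r=r and T="Tp r T ?a" and A="map (trl r T ?a) A", OF refl finT'[rule_format]] .
      qed
      from bchoice[OF IHk] obtain \<alpha>f where \<alpha>f: "\<forall>k\<in>K0. 0 < \<alpha>f k \<and> (\<forall>Fs E. map fst Fs = map (trl r T (A ! k)) A \<longrightarrow> E \<subseteq> Pts r (Tp r T (A ! k)) \<longrightarrow>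
          detP r (Tp r T (A ! k)) Fs E \<longrightarrow> noinf r (Tp r T (A ! k)) E \<longrightarrow>
          (\<forall>B. factors r (Tp r T (A ! k)) B \<longrightarrow> real (card (E \<inter> PiE {..<r} B)) \<le> \<alpha>f k * deltaP r B))" ..
      define \<alpha> where "\<alpha> = 1 + (\<Sum>k\<in>K0. \<alpha>f k)"
      have sum_nn: "0 \<le> (\<Sum>k\<in>K0. \<alpha>f k)" using \<alpha>f by (intro sum_nonneg) (simp add: less_imp_le)
      show ?thesis
      proof (intro exI[of _ \<alpha>] conjI allI impI)
        show "0 < \<alpha>" unfolding \<alpha>_def using sum_nn by simp
        fix Fs :: "((nat \<Rightarrow> nat \<Rightarrow> 'l) \<times> 'm) list" and E :: "(nat \<Rightarrow> nat \<Rightarrow> 'm) set" and B :: "nat \<Rightarrow> (nat \<Rightarrow> 'm) set"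
        assume mf: "map fst Fs = A" and sub: "E \<subseteq> Pts r T" and det: "detP r T Fs E" and ni: "noinf r T E"
          and fac: "factors r T B"
        define P where "P k = {p \<in> E \<inter> PiE {..<r} B. evalP r T (A ! k, snd (Fs ! k)) p = 0}" for k
        have cover: "E \<inter> PiE {..<r} B \<subseteq> (\<Union>k\<in>K0. P k)"
        proof
          fix p assume p: "p \<in> E \<inter> PiE {..<r} B"
          then have pE: "p \<in> E" by blast
          obtain f where f: "f \<in> set Fs" "evalP r T f p = 0" "nz r T (fst f)"
            using covering[OF e ne det sub ni pE] by blast
          obtain k where k: "k < length Fs" "Fs ! k = f" using f(1) by (meson in_set_conv_nth)
          have Ak: "A ! k = fst f" using mf k by (metis nth_map)
          have "k \<in> K0" using k f(3) Ak mf unfolding K0_def by (metis length_map mem_Collect_eq)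
          moreover have "evalP r T (A ! k, snd (Fs ! k)) p = 0" using f(2) k(2) Ak by simp
          then have "p \<in> P k" using p unfolding P_def by blast
          ultimately show "p \<in> (\<Union>k\<in>K0. P k)" by blast
        qed
        have finB: "\<forall>i<r. finite (B i)" using fac by (simp add: factors_def)
        have finG: "finite (PiE {..<r} B)" using finB by (intro finite_PiE) auto
        have Pk: "real (card (P k)) \<le> \<alpha>f k * deltaP r B" if k: "k \<in> K0" for k
        proof -
          have Q: "\<forall>Fs' E'. map fst Fs' = map (trl r T (A ! k)) (map fst Fs) \<longrightarrow> E' \<subseteq> Pts r (Tp r T (A ! k)) \<longrightarrow>
              detP r (Tp r T (A ! k)) Fs' E' \<longrightarrow> noinf r (Tp r T (A ! k)) E' \<longrightarrow>
              (\<forall>B'. factors r (Tp r T (A ! k)) B' \<longrightarrow> real (card (E' \<inter> PiE {..<r} B')) \<le> \<alpha>f k * deltaP r B')"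
            using \<alpha>f k unfolding mf by blast
          have a0: "0 \<le> \<alpha>f k" using \<alpha>f k by (simp add: less_imp_le)
          show ?thesis unfolding P_def by (rule slice_bound[OF fin sub det ni fac Q a0])
        qed
        have finU: "finite (\<Union>k\<in>K0. P k)" using finK finG unfolding P_def by auto
        have "card (E \<inter> PiE {..<r} B) \<le> card (\<Union>k\<in>K0. P k)" using cover finU by (rule card_mono[rotated])
        also have "\<dots> \<le> (\<Sum>k\<in>K0. card (P k))" by (rule card_UN_le[OF finK])
        finally have "real (card (E \<inter> PiE {..<r} B)) \<le> real (\<Sum>k\<in>K0. card (P k))" by (rule of_nat_mono)
        also have "\<dots> = (\<Sum>k\<in>K0. real (card (P k)))" by (rule of_nat_sum)
        also have "\<dots> \<le> (\<Sum>k\<in>K0. \<alpha>f k * deltaP r B)" by (intro sum_mono Pk)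
        also have "\<dots> = (\<Sum>k\<in>K0. \<alpha>f k) * deltaP r B" by (simp add: sum_distrib_right)
        also have "\<dots> \<le> \<alpha> * deltaP r B" unfolding \<alpha>_def using deltaP_nonneg[of r B]
          by (intro mult_right_mono) simp_all
        finally show "real (card (E \<inter> PiE {..<r} B)) \<le> \<alpha> * deltaP r B" .
      qed
    qed
  qed
qed

end

lemma sum_lessThan_add: "(\<Sum>v<(m::nat) + (n::nat). f v) = (\<Sum>v<m. f v) + (\<Sum>u<n. f (m + u))"
  by (induction n) (simp_all add: add.assoc)

lemma reindex:
  "(\<Sum>v<length (concat xs). g v (concat xs ! v)) =
   (\<Sum>i<length xs. \<Sum>t<length (xs ! i). g (length (concat (take i xs)) + t) (xs ! i ! t))"
proof (induction xs arbitrary: g)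
  case Nil
  then show ?case by simp
next
  case (Cons x xs)
  have "(\<Sum>v<length (concat (x # xs)). g v (concat (x # xs) ! v)) =
        (\<Sum>v<length x + length (concat xs). g v ((x @ concat xs) ! v))" by simp
  also have "\<dots> = (\<Sum>v<length x. g v ((x @ concat xs) ! v)) + (\<Sum>u<length (concat xs). g (length x + u) ((x @ concat xs) ! (length x + u)))"
    by (rule sum_lessThan_add)
  also have "(\<Sum>v<length x. g v ((x @ concat xs) ! v)) = (\<Sum>v<length x. g v (x ! v))"
    by (rule sum.cong) (auto simp: nth_append)
  also have "(\<Sum>u<length (concat xs). g (length x + u) ((x @ concat xs) ! (length x + u))) =
             (\<Sum>u<length (concat xs). g (length x + u) (concat xs ! u))"
    by simp
  also have "\<dots> = (\<Sum>i<length xs. \<Sum>t<length (xs ! i). g (length x + length (concat (take i xs)) + t) (xs ! i ! t))"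
    using Cons.IH[of "\<lambda>v. g (length x + v)"] by (simp add: add.assoc)
  finally have L: "(\<Sum>v<length (concat (x # xs)). g v (concat (x # xs) ! v)) =
      (\<Sum>v<length x. g v (x ! v)) + (\<Sum>i<length xs. \<Sum>t<length (xs ! i). g (length x + length (concat (take i xs)) + t) (xs ! i ! t))" .
  have R: "(\<Sum>i<length (x # xs). \<Sum>t<length ((x # xs) ! i). g (length (concat (take i (x # xs))) + t) ((x # xs) ! i ! t))
      = (\<Sum>t<length x. g t (x ! t)) + (\<Sum>i<length xs. \<Sum>t<length (xs ! i). g (length x + length (concat (take i xs)) + t) (xs ! i ! t))"
    unfolding length_Cons sum.lessThan_Suc_shift by simp
  show ?case unfolding L R ..
qed

lemma concat_inj:
  "length xs = length ys \<Longrightarrow> (\<forall>i<length xs. length (xs ! i) = length (ys ! i)) \<Longrightarrow> concat xs = concat ys \<Longrightarrow> xs = ys"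
proof (induction xs arbitrary: ys)
  case Nil
  then show ?case by simp
next
  case (Cons x xs)
  then obtain y ys' where ys: "ys = y # ys'" by (cases ys) auto
  have l: "length x = length y" using Cons.prems(2) ys by (metis length_greater_0_conv list.distinct(1) nth_Cons_0)
  have "x @ concat xs = y @ concat ys'" using Cons.prems(3) ys by simp
  then have xy: "x = y" and c: "concat xs = concat ys'" using l by (simp_all add: append_eq_append_conv)
  have "\<forall>i<length xs. length (xs ! i) = length (ys' ! i)"
    using Cons.prems(2) ys by (metis Suc_mono length_Cons nth_Cons_Suc)
  then have "xs = ys'" using Cons.IH[of ys'] Cons.prems(1) ys c by simp
  then show ?case using xy ys by simp
qed

definition convb :: "(nat \<Rightarrow> nat) \<Rightarrow> nat \<Rightarrow> 'm list \<Rightarrow> nat \<Rightarrow> 'm" where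
  "convb d i v = (\<lambda>t. if t < d i then v ! t else undefined)"

definition conv :: "nat \<Rightarrow> (nat \<Rightarrow> nat) \<Rightarrow> 'm list list \<Rightarrow> nat \<Rightarrow> nat \<Rightarrow> 'm" where
  "conv r d xs = (\<lambda>i. if i < r then convb d i (xs ! i) else undefined)"

lemma convb_inj: "inj_on (convb d i) {v. length v = d i}"
proof (rule inj_onI)
  fix u v assume u: "u \<in> {v. length v = d i}" and v: "v \<in> {v. length v = d i}" and eq: "convb d i u = convb d i v"
  show "u = v"
  proof (rule nth_equalityI)
    show "length u = length v" using u v by simp
    fix t assume "t < length u"
    then show "u ! t = v ! t" using eq u unfolding convb_def by (metis (mono_tags) mem_Collect_eq)
  qed
qed

lemma convb_PiE: "convb d i v \<in> PiE {..<d i} (\<lambda>_. UNIV)"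
  unfolding convb_def PiEU_iff by simp

lemma conv_Pts: "conv r d xs \<in> Pts r (\<lambda>i. {..<d i})"
  unfolding Pts_iff conv_def convb_def by simp

lemma conv_inj: "inj_on (conv r d) {xs. shaped r d xs}"
proof (rule inj_onI)
  fix xs ys assume xs: "xs \<in> {xs. shaped r d xs}" and ys: "ys \<in> {xs. shaped r d xs}" and eq: "conv r d xs = conv r d ys"
  show "xs = ys"
  proof (rule nth_equalityI)
    show "length xs = length ys" using xs ys by (simp add: shaped_def)
    fix i assume i: "i < length xs"
    then have ir: "i < r" using xs by (simp add: shaped_def)
    have "convb d i (xs ! i) = convb d i (ys ! i)" using eq ir unfolding conv_def by metis
    moreover have "xs ! i \<in> {v. length v = d i}" "ys ! i \<in> {v. length v = d i}" using xs ys ir by (simp_all add: shaped_def)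
    ultimately show "xs ! i = ys ! i" using convb_inj by (metis inj_onD)
  qed
qed

lemma conv_surj:
  assumes "p \<in> Pts r (\<lambda>i. {..<d i})"
  shows "\<exists>xs. shaped r d xs \<and> conv r d xs = p"
proof (intro exI conjI)
  let ?xs = "map (\<lambda>i. map (p i) [0..<d i]) [0..<r]"
  show "shaped r d ?xs" by (simp add: shaped_def)
  show "conv r d ?xs = p"
  proof
    fix i show "conv r d ?xs i = p i"
    proof (cases "i < r")
      case True
      show ?thesis
      proof
        fix t show "conv r d ?xs i t = p i t"
          using True assms unfolding conv_def convb_def Pts_iff by auto
      qed
    next
      case False
      then show ?thesis using assms unfolding conv_def Pts_iff by simp
    qed
  qed
qed

lemma length_concat_shaped: "shaped r d xs \<Longrightarrow> length (concat xs) = (\<Sum>i<r. d i)"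
  unfolding shaped_def by (simp add: length_concat sum_list_sum_nth atLeast0LessThan)

lemma take_concat_shaped: "shaped r d xs \<Longrightarrow> i \<le> r \<Longrightarrow> length (concat (take i xs)) = (\<Sum>j<i. d j)"
  unfolding shaped_def by (simp add: length_concat sum_list_sum_nth atLeast0LessThan min_def)

context ovs
begin

definition cf :: "(nat \<Rightarrow> nat) \<Rightarrow> (nat \<Rightarrow> 'l) \<times> 'm \<Rightarrow> (nat \<Rightarrow> nat \<Rightarrow> 'l) \<times> 'm" where
  "cf d f = ((\<lambda>i t. fst f ((\<Sum>j<i. d j) + t)), snd f)"

lemma eval_corr:
  assumes sh: "shaped r d xs" and N: "(\<Sum>i<r. d i) \<le> N"
  shows "evalE N f (tuple_env (concat xs)) = evalP r (\<lambda>i. {..<d i}) (cf d f) (conv r d xs)"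
proof -
  let ?n = "\<Sum>i<r. d i"
  let ?cx = "concat xs"
  have len: "length ?cx = ?n" using sh by (rule length_concat_shaped)
  have "(\<Sum>v<N. scale (fst f v) (tuple_env ?cx v)) = (\<Sum>v<?n + (N - ?n). scale (fst f v) (tuple_env ?cx v))"
    using N by simp
  also have "\<dots> = (\<Sum>v<?n. scale (fst f v) (tuple_env ?cx v)) + (\<Sum>u<N - ?n. scale (fst f (?n + u)) (tuple_env ?cx (?n + u)))"
    by (rule sum_lessThan_add)
  also have "(\<Sum>u<N - ?n. scale (fst f (?n + u)) (tuple_env ?cx (?n + u))) = 0"
    using len by (intro sum.neutral) (simp add: tuple_env_def)
  also have "(\<Sum>v<?n. scale (fst f v) (tuple_env ?cx v)) = (\<Sum>v<length ?cx. scale (fst f v) (?cx ! v))"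
    using len by (intro sum.cong) (simp_all add: tuple_env_def)
  also have "\<dots> = (\<Sum>i<length xs. \<Sum>t<length (xs ! i). scale (fst f (length (concat (take i xs)) + t)) (xs ! i ! t))"
    by (rule reindex)
  also have "\<dots> = (\<Sum>i<r. \<Sum>t<d i. scale (fst f ((\<Sum>j<i. d j) + t)) (xs ! i ! t))"
  proof (rule sum.cong)
    show "{..<length xs} = {..<r}" using sh by (simp add: shaped_def)
    fix i assume "i \<in> {..<r}"
    then have i: "i < r" by simp
    then have "length (concat (take i xs)) = (\<Sum>j<i. d j)" using take_concat_shaped[OF sh] by simp
    moreover have "length (xs ! i) = d i" using sh i by (simp add: shaped_def)
    ultimately show "(\<Sum>t<length (xs ! i). scale (fst f (length (concat (take i xs)) + t)) (xs ! i ! t)) =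
                     (\<Sum>t<d i. scale (fst f ((\<Sum>j<i. d j) + t)) (xs ! i ! t))" by simp
  qed
  also have "\<dots> = (\<Sum>i<r. Lb (\<lambda>i. {..<d i}) (fst (cf d f)) i (conv r d xs i))"
    unfolding Lb_def cf_def conv_def convb_def by (intro sum.cong) auto
  finally show ?thesis unfolding evalE_def evalP_def cf_def by simp
qed

end

lemma conv_grid:
  assumes Esh: "E \<subseteq> {xs. shaped r d xs}" and gf: "is_grid_factors r d B"
  shows "conv r d ` (E \<inter> grid r B) = conv r d ` E \<inter> PiE {..<r} (\<lambda>i. convb d i ` B i)"
proof
  show "conv r d ` (E \<inter> grid r B) \<subseteq> conv r d ` E \<inter> PiE {..<r} (\<lambda>i. convb d i ` B i)"
  proof
    fix p assume "p \<in> conv r d ` (E \<inter> grid r B)"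
    then obtain xs where xs: "xs \<in> E" "xs \<in> grid r B" "p = conv r d xs" by blast
    have "p \<in> PiE {..<r} (\<lambda>i. convb d i ` B i)"
      unfolding PiE_iff extensional_def mem_Collect_eq
    proof (intro conjI ballI allI impI)
      fix i assume "i \<in> {..<r}"
      then have i: "i < r" by simp
      then have "xs ! i \<in> B i" using xs(2) by (simp add: grid_def)
      then show "p i \<in> convb d i ` B i" using xs(3) i unfolding conv_def by simp
    next
      fix i assume "i \<notin> {..<r}"
      then show "p i = undefined" using xs(3) unfolding conv_def by simp
    qed
    then show "p \<in> conv r d ` E \<inter> PiE {..<r} (\<lambda>i. convb d i ` B i)" using xs by blast
  qed
next
  show "conv r d ` E \<inter> PiE {..<r} (\<lambda>i. convb d i ` B i) \<subseteq> conv r d ` (E \<inter> grid r B)"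
  proof
    fix p assume p: "p \<in> conv r d ` E \<inter> PiE {..<r} (\<lambda>i. convb d i ` B i)"
    then obtain xs where xs: "xs \<in> E" "p = conv r d xs" by blast
    have sh: "shaped r d xs" using xs Esh by blast
    have "xs ! i \<in> B i" if i: "i < r" for i
    proof -
      have "p i \<in> convb d i ` B i" using PiE_mem[OF p[THEN IntD2]] i by simp
      then obtain v where v: "v \<in> B i" "convb d i (xs ! i) = convb d i v" using xs(2) i unfolding conv_def by auto
      have "length v = d i" using gf v(1) i unfolding is_grid_factors_def by blast
      moreover have "length (xs ! i) = d i" using sh i by (simp add: shaped_def)
      ultimately have "xs ! i = v" using inj_onD[OF convb_inj[of d i] v(2)] by simp
      then show ?thesis using v(1) by simp
    qed
    then have "xs \<in> grid r B" using sh by (simp add: grid_def shaped_def)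
    then show "p \<in> conv r d ` (E \<inter> grid r B)" using xs by blast
  qed
qed

lemma conv_card:
  assumes Esh: "E \<subseteq> {xs. shaped r d xs}" and gf: "is_grid_factors r d B" and fin: "\<forall>i<r. finite (B i)"
  shows "card (E \<inter> grid r B) = card (conv r d ` E \<inter> PiE {..<r} (\<lambda>i. convb d i ` B i))"
    and "delta r B = deltaP r (\<lambda>i. convb d i ` B i)"
    and "factors r (\<lambda>i. {..<d i}) (\<lambda>i. convb d i ` B i)"
proof -
  have "inj_on (conv r d) (E \<inter> grid r B)" by (rule inj_on_subset[OF conv_inj]) (use Esh in blast)
  then have "card (conv r d ` (E \<inter> grid r B)) = card (E \<inter> grid r B)" by (rule card_image)
  then show "card (E \<inter> grid r B) = card (conv r d ` E \<inter> PiE {..<r} (\<lambda>i. convb d i ` B i))"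
    unfolding conv_grid[OF Esh gf] by simp
  have cB: "card (convb d i ` B i) = card (B i)" if "i < r" for i
  proof -
    have "B i \<subseteq> {v. length v = d i}" using gf that unfolding is_grid_factors_def by blast
    then have "inj_on (convb d i) (B i)" by (rule inj_on_subset[OF convb_inj])
    then show ?thesis by (rule card_image)
  qed
  show "delta r B = deltaP r (\<lambda>i. convb d i ` B i)"
    unfolding delta_def deltaP_def
  proof (rule sum.cong)
    fix I assume "I \<in> {I. I \<subseteq> {..<r} \<and> card I = r - 1}"
    then have "I \<subseteq> {..<r}" by simp
    show "(\<Prod>i\<in>I. real (card (B i))) = (\<Prod>i\<in>I. real (card (convb d i ` B i)))"
    proof (rule prod.cong)
      fix i assume "i \<in> I"
      then have "i < r" using \<open>I \<subseteq> {..<r}\<close> by blast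
      then show "real (card (B i)) = real (card (convb d i ` B i))" using cB by simp
    qed simp
  qed simp
  show "factors r (\<lambda>i. {..<d i}) (\<lambda>i. convb d i ` B i)"
    unfolding factors_def
  proof (intro allI impI conjI)
    fix i assume i: "i < r"
    show "convb d i ` B i \<subseteq> PiE {..<d i} (\<lambda>_. UNIV)" using convb_PiE by (rule image_subsetI)
    show "finite (convb d i ` B i)" using fin i by simp
  qed
qed

lemma conv_noinf:
  assumes Esh: "E \<subseteq> {xs. shaped r d xs}"
    and no: "\<nexists>B. is_grid_factors r d B \<and> (\<forall>i<r. infinite (B i)) \<and> grid r B \<subseteq> E"
  shows "noinf r (\<lambda>i. {..<d i}) (conv r d ` E)"
  unfolding noinf_def
proof
  assume "\<exists>G. (\<forall>i<r. G i \<subseteq> PiE {..<d i} (\<lambda>_. UNIV) \<and> infinite (G i)) \<and> PiE {..<r} G \<subseteq> conv r d ` E"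
  then obtain G where G: "\<forall>i<r. G i \<subseteq> PiE {..<d i} (\<lambda>_. UNIV) \<and> infinite (G i)"
    and GE: "PiE {..<r} G \<subseteq> conv r d ` E" by blast
  define LB where "LB i = (\<lambda>f. map f [0..<d i]) ` G i" for i
  have injm: "inj_on (\<lambda>f. map f [0..<d i]) (PiE {..<d i} (\<lambda>_. UNIV))" for i
  proof (rule inj_onI)
    fix f g assume f: "f \<in> PiE {..<d i} (\<lambda>_. UNIV)" and g: "g \<in> PiE {..<d i} (\<lambda>_. UNIV)"
      and eq: "map f [0..<d i] = map g [0..<d i]"
    show "f = g"
    proof
      fix t show "f t = g t"
      proof (cases "t < d i")
        case True
        then show ?thesis using eq by (metis (no_types, lifting) atLeastLessThan_iff map_eq_conv set_upt zero_le)
      next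
        case False
        then show ?thesis using f g unfolding PiEU_iff by simp
      qed
    qed
  qed
  have "is_grid_factors r d LB" unfolding is_grid_factors_def LB_def by auto
  moreover have "\<forall>i<r. infinite (LB i)"
  proof (intro allI impI)
    fix i assume i: "i < r"
    have "inj_on (\<lambda>f. map f [0..<d i]) (G i)" by (rule inj_on_subset[OF injm[of i]]) (use G i in blast)
    then show "infinite (LB i)" unfolding LB_def using G i finite_imageD by blast
  qed
  moreover have "grid r LB \<subseteq> E"
  proof
    fix xs assume xs: "xs \<in> grid r LB"
    have "conv r d xs \<in> PiE {..<r} G"
      unfolding PiE_iff extensional_def mem_Collect_eq
    proof (intro conjI ballI allI impI)
      fix i assume "i \<in> {..<r}"
      then have i: "i < r" by simp
      then have "xs ! i \<in> LB i" using xs by (simp add: grid_def)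
      then obtain f where f: "f \<in> G i" "xs ! i = map f [0..<d i]" unfolding LB_def by blast
      have fP: "f \<in> PiE {..<d i} (\<lambda>_. UNIV)" using f(1) G i by blast
      have "convb d i (xs ! i) = f"
      proof
        fix t show "convb d i (xs ! i) t = f t"
          using f(2) fP unfolding convb_def PiEU_iff by auto
      qed
      then show "conv r d xs i \<in> G i" using f(1) i unfolding conv_def by simp
    next
      fix i assume "i \<notin> {..<r}"
      then show "conv r d xs i = undefined" unfolding conv_def by simp
    qed
    then obtain ys where ys: "ys \<in> E" "conv r d xs = conv r d ys" using GE by blast
    have "shaped r d xs"
      unfolding shaped_def
    proof (intro conjI allI impI)
      show "length xs = r" using xs by (simp add: grid_def)
      fix i assume i: "i < r"
      then have "xs ! i \<in> LB i" using xs by (simp add: grid_def)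
      then show "length (xs ! i) = d i" unfolding LB_def by auto
    qed
    moreover have "shaped r d ys" using ys Esh by blast
    ultimately have "xs = ys" using conv_inj ys(2) by (metis inj_onD mem_Collect_eq)
    then show "xs \<in> E" using ys by simp
  qed
  ultimately show False using no by blast
qed

theorem corollary2p23:
  fixes scale :: "'l::{division_ring,linordered_ring_strict} \<Rightarrow> 'm::linordered_ab_group_add \<Rightarrow> 'm"
    and r :: nat and d :: "nat \<Rightarrow> nat" and E :: "'m list list set"
  assumes "ordered_vector_space scale"
    and "semilinear_prod scale r d E"
  shows "\<exists>\<alpha>::real. \<alpha> > 0 \<and>
           ((\<nexists>B. is_grid_factors r d B \<and> (\<forall>i<r. infinite (B i)) \<and> grid r B \<subseteq> E) \<longrightarrow>
            (\<forall>B. is_grid_factors r d B \<and> (\<forall>i<r. finite (B i)) \<longrightarrow>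
                 real (card (E \<inter> grid r B)) \<le> \<alpha> * delta r B))"
proof -
  interpret ovs scale by (rule ovs.intro[OF assms(1)])
  let ?T = "\<lambda>i. {..<d i}"
  let ?Eh = "conv r d ` E"
  have Esh: "E \<subseteq> {xs. shaped r d xs}" using assms(2) unfolding semilinear_prod_def by blast
  have EhP: "?Eh \<subseteq> Pts r ?T" using conv_Pts by blast
  have finT: "\<forall>i<r. finite (?T i)" by simp
  show ?thesis
  proof (cases "\<exists>e::'m. 0 < e")
    case True
    then obtain e :: 'm where e: "0 < e" by blast
    let ?n = "\<Sum>i<r. d i"
    obtain \<phi> :: "('l, 'm) fm" where phi: "concat ` E = {xs. length xs = ?n \<and> fm_sat scale (tuple_env xs) \<phi>}"
      using assms(2) unfolding semilinear_prod_def semilinear_def by blast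
    obtain N0 where "fm_ok N0 \<phi>" using fm_ok_ex by blast
    then have okN: "fm_ok (max N0 ?n) \<phi>" by (rule fm_ok_mono) simp
    obtain F where F: "finite F" "detE (max N0 ?n) F \<phi>" using qe[OF okN e] by blast
    obtain Fl where Fl: "set Fl = F" using finite_list[OF F(1)] by blast
    define Fs where "Fs = map (cf d) Fl"
    have memE: "conv r d xs \<in> ?Eh \<longleftrightarrow> fm_sat scale (tuple_env (concat xs)) \<phi>" if sh: "shaped r d xs" for xs
    proof -
      have "conv r d xs \<in> ?Eh \<longleftrightarrow> xs \<in> E"
      proof
        assume "conv r d xs \<in> ?Eh"
        then obtain ys where ys: "ys \<in> E" "conv r d xs = conv r d ys" by blast
        have "ys \<in> {xs. shaped r d xs}" using ys(1) Esh by blast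
        moreover have "xs \<in> {xs. shaped r d xs}" using sh by simp
        ultimately have "xs = ys" using inj_onD[OF conv_inj ys(2)] by simp
        then show "xs \<in> E" using ys(1) by simp
      qed blast
      also have "\<dots> \<longleftrightarrow> concat xs \<in> concat ` E"
      proof
        assume "concat xs \<in> concat ` E"
        then obtain ys where ys: "ys \<in> E" "concat xs = concat ys" by blast
        have shy: "shaped r d ys" using ys Esh by blast
        have "xs = ys" using concat_inj[OF _ _ ys(2)] sh shy by (simp add: shaped_def)
        then show "xs \<in> E" using ys by simp
      qed blast
      also have "\<dots> \<longleftrightarrow> fm_sat scale (tuple_env (concat xs)) \<phi>"
      proof -
        have "length (concat xs) = ?n" using length_concat_shaped[OF sh] .
        then show ?thesis unfolding phi by simp
      qed
      finally show ?thesis .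
    qed
    have det: "detP r ?T Fs ?Eh"
      unfolding detP_def
    proof (intro ballI impI)
      fix p q assume p: "p \<in> Pts r ?T" and q: "q \<in> Pts r ?T"
        and s: "\<forall>f\<in>set Fs. samesign (evalP r ?T f p) (evalP r ?T f q)"
      obtain xs where xs: "shaped r d xs" "conv r d xs = p" using conv_surj[OF p] by blast
      obtain ys where ys: "shaped r d ys" "conv r d ys = q" using conv_surj[OF q] by blast
      have "\<forall>f\<in>F. samesign (evalE (max N0 ?n) f (tuple_env (concat xs))) (evalE (max N0 ?n) f (tuple_env (concat ys)))"
      proof
        fix f assume "f \<in> F"
        then have "cf d f \<in> set Fs" unfolding Fs_def using Fl by simp
        then show "samesign (evalE (max N0 ?n) f (tuple_env (concat xs))) (evalE (max N0 ?n) f (tuple_env (concat ys)))"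
          using s eval_corr[OF xs(1), of "max N0 ?n" f] eval_corr[OF ys(1), of "max N0 ?n" f] xs(2) ys(2) by simp
      qed
      then have "fm_sat scale (tuple_env (concat xs)) \<phi> \<longleftrightarrow> fm_sat scale (tuple_env (concat ys)) \<phi>"
        using F(2) unfolding detE_def by blast
      then show "p \<in> ?Eh \<longleftrightarrow> q \<in> ?Eh" using memE[OF xs(1)] memE[OF ys(1)] xs(2) ys(2) by simp
    qed
    obtain \<alpha> where \<alpha>: "0 < \<alpha>" and H: "\<forall>Fs' E'. map fst Fs' = map fst Fs \<longrightarrow> E' \<subseteq> Pts r ?T \<longrightarrow> detP r ?T Fs' E' \<longrightarrow> noinf r ?T E' \<longrightarrow>
        (\<forall>B. factors r ?T B \<longrightarrow> real (card (E' \<inter> PiE {..<r} B)) \<le> \<alpha> * deltaP r B)"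
      using main_ind[OF e, rule_format, where r=r and T="\<lambda>i. {..<d i}" and A="map fst Fs", OF refl finT[rule_format]] by blast
    show ?thesis
    proof (intro exI[of _ \<alpha>] conjI impI allI)
      show "0 < \<alpha>" by (rule \<alpha>)
      fix B :: "nat \<Rightarrow> 'm list set" assume no: "\<nexists>B. is_grid_factors r d B \<and> (\<forall>i<r. infinite (B i)) \<and> grid r B \<subseteq> E"
        and B: "is_grid_factors r d B \<and> (\<forall>i<r. finite (B i))"
      have ni: "noinf r ?T ?Eh" by (rule conv_noinf[OF Esh no])
      note cc = conv_card[OF Esh B[THEN conjunct1] B[THEN conjunct2]]
      have "real (card (?Eh \<inter> PiE {..<r} (\<lambda>i. convb d i ` B i))) \<le> \<alpha> * deltaP r (\<lambda>i. convb d i ` B i)"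
        by (rule H[rule_format, OF refl EhP det ni cc(3)])
      then show "real (card (E \<inter> grid r B)) \<le> \<alpha> * delta r B" using cc(1,2) by simp
    qed
  next
    case False
    have zero: "\<forall>x::'m. x = 0"
    proof
      fix x :: 'm
      show "x = 0"
      proof (rule ccontr)
        assume "x \<noteq> 0"
        then have "x < 0 \<or> 0 < x" by (rule linorder_neqE) simp_all
        then have "0 < - x \<or> 0 < x" by simp
        then show False using False by blast
      qed
    qed
    show ?thesis
    proof (intro exI[of _ "1::real"] conjI impI allI)
      show "(0::real) < 1" by simp
      fix B :: "nat \<Rightarrow> 'm list set" assume B: "is_grid_factors r d B \<and> (\<forall>i<r. finite (B i))"
      note cc = conv_card[OF Esh B[THEN conjunct1] B[THEN conjunct2]]
      have finB: "\<forall>i<r. finite (convb d i ` B i)" using B by simp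
      have "r = 0 \<or> (\<exists>j<r. card (convb d j ` B j) \<le> 1)"
      proof (cases "r = 0")
        case False
        then have r0: "0 < r" by simp
        have sub: "convb d 0 ` B 0 \<subseteq> PiE {..<d 0} (\<lambda>_. UNIV)" by (rule image_subsetI) (rule convb_PiE)
        have allEq: "\<forall>a1\<in>convb d 0 ` B 0. \<forall>a2\<in>convb d 0 ` B 0. a1 = a2"
        proof (intro ballI)
          fix a1 a2 assume "a1 \<in> convb d 0 ` B 0" "a2 \<in> convb d 0 ` B 0"
          then have "a1 \<in> PiE {..<d 0} (\<lambda>_. UNIV)" "a2 \<in> PiE {..<d 0} (\<lambda>_. UNIV)" using sub by blast+
          then have "\<forall>t. t \<notin> {..<d 0} \<longrightarrow> a1 t = undefined" "\<forall>t. t \<notin> {..<d 0} \<longrightarrow> a2 t = undefined"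
            unfolding PiEU_iff by blast+
          then show "a1 = a2"
          proof (intro ext)
            fix t
            assume h: "\<forall>t. t \<notin> {..<d 0} \<longrightarrow> a1 t = undefined" "\<forall>t. t \<notin> {..<d 0} \<longrightarrow> a2 t = undefined"
            show "a1 t = a2 t"
            proof (cases "t \<in> {..<d 0}")
              case True then show ?thesis using zero[rule_format, of "a1 t"] zero[rule_format, of "a2 t"] by simp
            next
              case False then show ?thesis using h by simp
            qed
          qed
        qed
        have fin0: "finite (convb d 0 ` B 0)" using finB r0 by simp
        have "card (convb d 0 ` B 0) \<le> Suc 0" unfolding card_le_Suc0_iff_eq[OF fin0] by (rule allEq)
        then have "card (convb d 0 ` B 0) \<le> 1" by simp
        then show ?thesis using r0 by blast
      qed simp
      then have "real (card (?Eh \<inter> PiE {..<r} (\<lambda>i. convb d i ` B i))) \<le> deltaP r (\<lambda>i. convb d i ` B i)"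
        by (rule trivial_case[OF finB cc(3)])
      then show "real (card (E \<inter> grid r B)) \<le> 1 * delta r B" using cc(1,2) by simp
    qed
  qed
qed

end
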